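(* Let $\mathfrak V$ be a subvariety of the variety $\mathfrak B$ of all bicommutative algebras over $K$, and suppose $\mathfrak V$ satisfies a polynomial identity $f=0$, where $0\neq f\in F(\mathfrak B)$ has degree $k$. Then there is a polynomial $P(n)$ of degree $k-1$ such that $c_n(\mathfrak V)\le P(n)$ for all $n\ge 1$. In particular $\limsup_{n\to\infty}\sqrt[n]{c_n(\mathfrak V)}\le 1$, whereas $c_n(\mathfrak B)=2^n-2$ for $n\ge2$, so $\exp(\mathfrak B)=2$ and every proper subvariety of $\mathfrak B$ has codimension growth of exponent at most $1$.
   Context: $K$ is a field of characteristic $0$; all algebras are (not necessarily associative) $K$-algebras. An algebra is bicommutative if it satisfies the identities $(x_1x_2)x_3=(x_1x_3)x_2$ and $x_1(x_2x_3)=x_2(x_1x_3)$. $\mathfrak B$ denotes the variety of all bicommutative algebras, $F(\mathfrak B)$ its free algebra on countably many generators $x_1,x_2,\ldots$, and $F_d(\mathfrak B)$ its free algebra on $x_1,\dots,x_d$. A variety $\mathfrak V\subseteq\mathfrak B$ satisfies $f=0$ if $f$ lies in the T-ideal of $\mathfrak V$ (i.e. $f$ vanishes under all substitutions in all algebras of $\mathfrak V$). For a variety $\mathfrak V$, $P_n(\mathfrak V)$ is the space of multilinear elements of degree $n$ in $x_1,\dots,x_n$ of the relatively free algebra $F_n(\mathfrak V)$, and the $n$-th codimension is $c_n(\mathfrak V)=\dim P_n(\mathfrak V)$. The fact $c_1(\mathfrak B)=1$, $c_n(\mathfrak B)=2^n-2$ for $n\ge 2$ is known. *)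

theory Defs
  imports "HOL-Library.Poly_Mapping" "HOL-Computational_Algebra.Polynomial"
    "HOL-Library.Liminf_Limsup" "HOL-Library.Extended_Real" Complex_Main
begin

datatype nmon = Var nat | Mul nmon nmon

text \<open>Elements of the free nonassociative algebra: finite K-linear combinations of monomials.\<close>
type_synonym 'k nalg = "nmon \<Rightarrow>\<^sub>0 'k"

definition smult_na :: "'k::field \<Rightarrow> 'k nalg \<Rightarrow> 'k nalg" where
  "smult_na c p = Poly_Mapping.map (\<lambda>a. c * a) p"

definition mon :: "nmon \<Rightarrow> 'k::field nalg" where
  "mon t = Poly_Mapping.single t 1"

definition mul_na :: "'k::field nalg \<Rightarrow> 'k nalg \<Rightarrow> 'k nalg" where
  "mul_na p q = (\<Sum>a\<in>Poly_Mapping.keys p. \<Sum>b\<in>Poly_Mapping.keys q.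
       Poly_Mapping.single (Mul a b) (Poly_Mapping.lookup p a * Poly_Mapping.lookup q b))"

fun subst_mon :: "(nat \<Rightarrow> 'k::field nalg) \<Rightarrow> nmon \<Rightarrow> 'k nalg" where
  "subst_mon s (Var i) = s i"
| "subst_mon s (Mul a b) = mul_na (subst_mon s a) (subst_mon s b)"

definition subst_na :: "(nat \<Rightarrow> 'k::field nalg) \<Rightarrow> 'k nalg \<Rightarrow> 'k nalg" where
  "subst_na s p = (\<Sum>t\<in>Poly_Mapping.keys p. smult_na (Poly_Mapping.lookup p t) (subst_mon s t))"

definition T_ideal :: "'k::field nalg set \<Rightarrow> bool" where
  "T_ideal I \<longleftrightarrow> 0 \<in> I
     \<and> (\<forall>p\<in>I. \<forall>q\<in>I. p + q \<in> I)
     \<and> (\<forall>c. \<forall>p\<in>I. smult_na c p \<in> I)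
     \<and> (\<forall>p\<in>I. \<forall>q. mul_na p q \<in> I \<and> mul_na q p \<in> I)
     \<and> (\<forall>p\<in>I. \<forall>s. subst_na s p \<in> I)"

definition bicomm_ids :: "'k::field nalg set" where
  "bicomm_ids = {mon (Mul (Mul (Var 1) (Var 2)) (Var 3)) - mon (Mul (Mul (Var 1) (Var 3)) (Var 2)),
                 mon (Mul (Var 1) (Mul (Var 2) (Var 3))) - mon (Mul (Var 2) (Mul (Var 1) (Var 3)))}"

text \<open>T(B): the T-ideal of the variety of all bicommutative algebras,
  so that F(B) is the quotient of the absolutely free algebra by T_B.\<close>
definition T_B :: "'k::field nalg set" where
  "T_B = \<Inter>{I. T_ideal I \<and> bicomm_ids \<subseteq> I}"

text \<open>A subvariety V of B is given by its T-ideal T(V), a T-ideal containing T(B).\<close>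
definition subvariety_B :: "'k::field nalg set \<Rightarrow> bool" where
  "subvariety_B I \<longleftrightarrow> T_ideal I \<and> T_B \<subseteq> I"

fun leaves :: "nmon \<Rightarrow> nat list" where
  "leaves (Var i) = [i]"
| "leaves (Mul a b) = leaves a @ leaves b"

definition mdeg :: "nmon \<Rightarrow> nat" where
  "mdeg t = length (leaves t)"

definition deg_FB :: "'k::field nalg \<Rightarrow> nat" where
  "deg_FB f = (LEAST d. \<exists>g. f - g \<in> T_B \<and> (\<forall>t\<in>Poly_Mapping.keys g. mdeg t \<le> d))"

definition multilin_mons :: "nat \<Rightarrow> nmon set" where
  "multilin_mons n = {t. mset (leaves t) = mset [1..<n+1]}"

definition indep_mod :: "'k::field nalg set \<Rightarrow> nmon set \<Rightarrow> bool" where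
  "indep_mod I S \<longleftrightarrow> (\<forall>c. (\<Sum>t\<in>S. smult_na (c t) (mon t)) \<in> I \<longrightarrow> (\<forall>t\<in>S. c t = 0))"

text \<open>c_n(V) = dim P_n(V), where P_n(V) is spanned by the images of the multilinear monomials.\<close>
definition codim :: "'k::field nalg set \<Rightarrow> nat \<Rightarrow> nat" where
  "codim I n = Max {card S | S. S \<subseteq> multilin_mons n \<and> indep_mod I S}"

end

theory Submission
  imports Defs
begin

lemma lookup_smult_na [simp]: "Poly_Mapping.lookup (smult_na c p) t = c * Poly_Mapping.lookup p t"
  unfolding smult_na_def by (simp add: map.rep_eq when_def)

lemma lookup_mon: "Poly_Mapping.lookup (mon t) u = (if t = u then 1 else 0)"
  unfolding mon_def by (simp add: lookup_single when_def)

lemma smult_na_add: "smult_na c (p + q) = smult_na c p + smult_na c q"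
  by (rule poly_mapping_eqI) (simp add: lookup_add algebra_simps)
lemma smult_na_add_left: "smult_na (a + b) p = smult_na a p + smult_na b p"
  by (rule poly_mapping_eqI) (simp add: lookup_add algebra_simps)
lemma smult_na_diff: "smult_na c (p - q) = smult_na c p - smult_na c q"
  by (rule poly_mapping_eqI) (simp add: lookup_minus algebra_simps)
lemma smult_na_smult [simp]: "smult_na a (smult_na b p) = smult_na (a * b) p"
  by (rule poly_mapping_eqI) (simp add: algebra_simps)
lemma smult_na_one [simp]: "smult_na 1 p = p"
  by (rule poly_mapping_eqI) simp
lemma smult_na_zero [simp]: "smult_na 0 p = 0"
  by (rule poly_mapping_eqI) simp
lemma smult_na_zero2 [simp]: "smult_na c 0 = 0"
  by (rule poly_mapping_eqI) simp
lemma smult_na_minus1: "smult_na (-1) p = - p"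
  by (rule poly_mapping_eqI) simp
lemma smult_na_sum: "smult_na c (sum f A) = (\<Sum>x\<in>A. smult_na c (f x))"
  by (rule poly_mapping_eqI) (simp add: lookup_sum sum_distrib_left)
lemma smult_na_sum_left: "smult_na (sum f A) p = (\<Sum>x\<in>A. smult_na (f x) p)"
  by (rule poly_mapping_eqI) (simp add: lookup_sum sum_distrib_right)
lemma smult_single: "smult_na c (Poly_Mapping.single t a) = Poly_Mapping.single t (c * a)"
  by (rule poly_mapping_eqI) (simp add: lookup_single when_def)
lemma smult_mon: "smult_na c (mon t) = Poly_Mapping.single t c"
  unfolding mon_def by (simp add: smult_single)

interpretation nvs: vector_space "smult_na :: 'k::field \<Rightarrow> 'k nalg \<Rightarrow> 'k nalg"
  by unfold_locales (simp_all add: smult_na_add smult_na_add_left)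

lemma expansion_sup:
  assumes "finite A" "Poly_Mapping.keys p \<subseteq> A"
  shows "p = (\<Sum>t\<in>A. smult_na (Poly_Mapping.lookup p t) (mon t))"
proof (rule poly_mapping_eqI)
  fix u
  have "(\<Sum>t\<in>A. Poly_Mapping.lookup (smult_na (Poly_Mapping.lookup p t) (mon t)) u)
      = (\<Sum>t\<in>A. if t = u then Poly_Mapping.lookup p t else 0)"
    by (intro sum.cong) (auto simp: lookup_mon)
  also have "\<dots> = Poly_Mapping.lookup p u"
    using assms by (auto simp: sum.delta in_keys_iff)
  finally show "Poly_Mapping.lookup p u = Poly_Mapping.lookup (\<Sum>t\<in>A. smult_na (Poly_Mapping.lookup p t) (mon t)) u"
    by (simp add: lookup_sum)
qed

lemma expansion: "p = (\<Sum>t\<in>Poly_Mapping.keys p. smult_na (Poly_Mapping.lookup p t) (mon t))"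
  by (rule expansion_sup) auto

lemma lookup_mul_na:
  "Poly_Mapping.lookup (mul_na p q) m =
     (case m of Var i \<Rightarrow> 0 | Mul a b \<Rightarrow> Poly_Mapping.lookup p a * Poly_Mapping.lookup q b)"
proof -
  have "Poly_Mapping.lookup (mul_na p q) m = (\<Sum>a\<in>Poly_Mapping.keys p. \<Sum>b\<in>Poly_Mapping.keys q.
        if Mul a b = m then Poly_Mapping.lookup p a * Poly_Mapping.lookup q b else 0)"
    unfolding mul_na_def by (simp add: lookup_sum lookup_single when_def)
  also have "\<dots> = (case m of Var i \<Rightarrow> 0 | Mul a b \<Rightarrow> Poly_Mapping.lookup p a * Poly_Mapping.lookup q b)"
  proof (cases m)
    case (Var i) then show ?thesis by simp
  next
    case (Mul a0 b0)
    have "(\<Sum>a\<in>Poly_Mapping.keys p. \<Sum>b\<in>Poly_Mapping.keys q.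
        if Mul a b = m then Poly_Mapping.lookup p a * Poly_Mapping.lookup q b else 0)
      = (\<Sum>a\<in>Poly_Mapping.keys p. if a = a0 then Poly_Mapping.lookup p a * Poly_Mapping.lookup q b0 else 0)"
      by (intro sum.cong) (auto simp: Mul sum.delta in_keys_iff)
    also have "\<dots> = Poly_Mapping.lookup p a0 * Poly_Mapping.lookup q b0"
      by (auto simp: sum.delta in_keys_iff)
    finally show ?thesis by (simp add: Mul)
  qed
  finally show ?thesis .
qed

lemma mul_na_add_left: "mul_na (p + q) r = mul_na p r + mul_na q r"
  by (rule poly_mapping_eqI) (simp add: lookup_mul_na lookup_add split: nmon.split; simp add: algebra_simps)
lemma mul_na_add_right: "mul_na r (p + q) = mul_na r p + mul_na r q"
  by (rule poly_mapping_eqI) (simp add: lookup_mul_na lookup_add split: nmon.split; simp add: algebra_simps)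
lemma mul_na_diff_left: "mul_na (p - q) r = mul_na p r - mul_na q r"
  by (rule poly_mapping_eqI) (simp add: lookup_mul_na lookup_minus split: nmon.split; simp add: algebra_simps)
lemma mul_na_diff_right: "mul_na r (p - q) = mul_na r p - mul_na r q"
  by (rule poly_mapping_eqI) (simp add: lookup_mul_na lookup_minus split: nmon.split; simp add: algebra_simps)
lemma mul_na_smult_left: "mul_na (smult_na c p) r = smult_na c (mul_na p r)"
  by (rule poly_mapping_eqI) (simp add: lookup_mul_na split: nmon.split)
lemma mul_na_smult_right: "mul_na r (smult_na c p) = smult_na c (mul_na r p)"
  by (rule poly_mapping_eqI) (simp add: lookup_mul_na split: nmon.split; simp add: algebra_simps)
lemma mul_na_zero_left [simp]: "mul_na 0 r = 0"
  by (rule poly_mapping_eqI) (simp add: lookup_mul_na split: nmon.split)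
lemma mul_na_zero_right [simp]: "mul_na r 0 = 0"
  by (rule poly_mapping_eqI) (simp add: lookup_mul_na split: nmon.split)
lemma mul_na_mon: "mul_na (mon a) (mon b) = mon (Mul a b)"
  by (rule poly_mapping_eqI) (simp add: lookup_mul_na lookup_mon split: nmon.split)
lemma mul_na_sum_left: "mul_na (sum f A) r = (\<Sum>x\<in>A. mul_na (f x) r)"
  by (induction A rule: infinite_finite_induct) (simp_all add: mul_na_add_left)
lemma mul_na_sum_right: "mul_na r (sum f A) = (\<Sum>x\<in>A. mul_na r (f x))"
  by (induction A rule: infinite_finite_induct) (simp_all add: mul_na_add_right)

lemma keys_mul_na: "m \<in> Poly_Mapping.keys (mul_na p q) \<Longrightarrow>
   \<exists>a b. m = Mul a b \<and> a \<in> Poly_Mapping.keys p \<and> b \<in> Poly_Mapping.keys q"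
  by (cases m) (auto simp: in_keys_iff lookup_mul_na)

lemma subst_na_sup:
  assumes "finite A" "Poly_Mapping.keys p \<subseteq> A"
  shows "subst_na s p = (\<Sum>t\<in>A. smult_na (Poly_Mapping.lookup p t) (subst_mon s t))"
  unfolding subst_na_def
  using assms by (intro sum.mono_neutral_left) (auto simp: in_keys_iff)

lemma subst_na_add: "subst_na s (p + q) = subst_na s p + subst_na s q"
proof -
  let ?A = "Poly_Mapping.keys p \<union> Poly_Mapping.keys q"
  have f: "finite ?A" by auto
  have "subst_na s (p + q) = (\<Sum>t\<in>?A. smult_na (Poly_Mapping.lookup (p+q) t) (subst_mon s t))"
    using keys_add[of p q] by (intro subst_na_sup f) auto
  also have "\<dots> = (\<Sum>t\<in>?A. smult_na (Poly_Mapping.lookup p t) (subst_mon s t)) +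
                  (\<Sum>t\<in>?A. smult_na (Poly_Mapping.lookup q t) (subst_mon s t))"
    by (simp add: lookup_add smult_na_add_left sum.distrib)
  also have "\<dots> = subst_na s p + subst_na s q"
    by (simp add: subst_na_sup[OF f, symmetric])
  finally show ?thesis .
qed

lemma subst_na_smult: "subst_na s (smult_na c p) = smult_na c (subst_na s p)"
proof -
  have "subst_na s (smult_na c p) = (\<Sum>t\<in>Poly_Mapping.keys p. smult_na (Poly_Mapping.lookup (smult_na c p) t) (subst_mon s t))"
    by (rule subst_na_sup) (auto simp: in_keys_iff)
  then show ?thesis by (simp add: subst_na_def smult_na_sum)
qed

lemma subst_na_zero [simp]: "subst_na s 0 = 0"
  by (simp add: subst_na_def)

lemma subst_na_diff: "subst_na s (p - q) = subst_na s p - subst_na s q"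
  using subst_na_add[of s "p - q" q] by (simp add: algebra_simps)

lemma subst_na_sum: "subst_na s (sum f A) = (\<Sum>x\<in>A. subst_na s (f x))"
  by (induction A rule: infinite_finite_induct) (simp_all add: subst_na_add)

lemma subst_na_mon [simp]: "subst_na s (mon t) = subst_mon s t"
  by (simp add: subst_na_def mon_def)

lemma subst_na_mul: "subst_na s (mul_na p q) = mul_na (subst_na s p) (subst_na s q)"
proof -
  have "mul_na p q = (\<Sum>a\<in>Poly_Mapping.keys p. \<Sum>b\<in>Poly_Mapping.keys q.
        smult_na (Poly_Mapping.lookup p a * Poly_Mapping.lookup q b) (mon (Mul a b)))"
    unfolding mul_na_def by (simp add: smult_mon)
  then have "subst_na s (mul_na p q) = (\<Sum>a\<in>Poly_Mapping.keys p. \<Sum>b\<in>Poly_Mapping.keys q.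
        smult_na (Poly_Mapping.lookup p a * Poly_Mapping.lookup q b)
          (mul_na (subst_mon s a) (subst_mon s b)))"
    by (simp add: subst_na_sum subst_na_smult)
  also have "\<dots> = mul_na (\<Sum>a\<in>Poly_Mapping.keys p. smult_na (Poly_Mapping.lookup p a) (subst_mon s a))
                        (\<Sum>b\<in>Poly_Mapping.keys q. smult_na (Poly_Mapping.lookup q b) (subst_mon s b))"
    apply (simp add: mul_na_sum_left mul_na_sum_right mul_na_smult_left mul_na_smult_right smult_na_sum)
    apply (subst sum.swap)
    apply (simp add: mult.commute)
    done
  finally show ?thesis by (simp add: subst_na_def)
qed

fun tsub :: "(nat \<Rightarrow> nmon) \<Rightarrow> nmon \<Rightarrow> nmon" where
  "tsub \<sigma> (Var i) = \<sigma> i"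
| "tsub \<sigma> (Mul a b) = Mul (tsub \<sigma> a) (tsub \<sigma> b)"

lemma subst_mon_tsub: "subst_mon (\<lambda>i. mon (\<sigma> i)) t = mon (tsub \<sigma> t)"
  by (induction t) (simp_all add: mul_na_mon)

locale Tid =
  fixes I :: "'k::field nalg set"
  assumes TI: "T_ideal I"
begin
lemma zero: "0 \<in> I" using TI by (simp add: T_ideal_def)
lemma add: "p \<in> I \<Longrightarrow> q \<in> I \<Longrightarrow> p + q \<in> I" using TI by (simp add: T_ideal_def)
lemma smult: "p \<in> I \<Longrightarrow> smult_na c p \<in> I" using TI by (simp add: T_ideal_def)
lemma mulL: "p \<in> I \<Longrightarrow> mul_na q p \<in> I" using TI by (simp add: T_ideal_def)
lemma mulR: "p \<in> I \<Longrightarrow> mul_na p q \<in> I" using TI by (simp add: T_ideal_def)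
lemma subst: "p \<in> I \<Longrightarrow> subst_na s p \<in> I" using TI by (simp add: T_ideal_def)
lemma uminus: "p \<in> I \<Longrightarrow> - p \<in> I" using smult[of p "-1"] by (simp add: smult_na_minus1)
lemma diff: "p \<in> I \<Longrightarrow> q \<in> I \<Longrightarrow> p - q \<in> I" using add[OF _ uminus, of p q] by simp
lemma sum: "(\<And>x. x \<in> A \<Longrightarrow> f x \<in> I) \<Longrightarrow> sum f A \<in> I"
  by (induction A rule: infinite_finite_induct) (auto intro: zero add)
lemma smult_iff: "c \<noteq> 0 \<Longrightarrow> smult_na c p \<in> I \<longleftrightarrow> p \<in> I"
  using smult[of "smult_na c p" "inverse c"] by (auto intro: smult)
lemma add_iff: "q \<in> I \<Longrightarrow> p + q \<in> I \<longleftrightarrow> p \<in> I"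
  using diff[of "p+q" q] by (auto intro: add)
end

lemma T_ideal_Inter: "(\<And>I. I \<in> C \<Longrightarrow> T_ideal I) \<Longrightarrow> T_ideal (\<Inter>C)"
  unfolding T_ideal_def by blast

lemma T_ideal_TB: "T_ideal T_B"
  unfolding T_B_def by (rule T_ideal_Inter) auto

interpretation TB: Tid T_B by unfold_locales (rule T_ideal_TB)

lemma bicomm_TB: "bicomm_ids \<subseteq> T_B"
  unfolding T_B_def by auto

section \<open>Congruence of monomials modulo T(B)\<close>





inductive bcr :: "nmon \<Rightarrow> nmon \<Rightarrow> bool" (infix \<open>\<approx>\<close> 50) where
  refl: "t \<approx> t"
| sym: "t \<approx> u \<Longrightarrow> u \<approx> t"
| trans: "t \<approx> u \<Longrightarrow> u \<approx> v \<Longrightarrow> t \<approx> v"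
| F1: "Mul (Mul p q) r \<approx> Mul (Mul p r) q"
| F2: "Mul p (Mul q r) \<approx> Mul q (Mul p r)"
| cL: "t \<approx> u \<Longrightarrow> Mul t v \<approx> Mul u v"
| cR: "t \<approx> u \<Longrightarrow> Mul v t \<approx> Mul v u"

lemma bcr_sound: "t \<approx> u \<Longrightarrow> (mon t - mon u :: 'k::field nalg) \<in> T_B"
proof (induction rule: bcr.induct)
  case (refl t) then show ?case by (simp add: TB.zero)
next
  case (sym t u) then show ?case using TB.uminus by fastforce
next
  case (trans t u v) then show ?case using TB.add by fastforce
next
  case (F1 p q r)
  let ?s = "\<lambda>i. mon ((\<lambda>i. if i = 1 then p else if i = 2 then q else r) i) :: 'k nalg"
  have "mon (Mul (Mul (Var 1) (Var 2)) (Var 3)) - mon (Mul (Mul (Var 1) (Var 3)) (Var 2)) \<in> (T_B :: 'k nalg set)"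
    using bicomm_TB by (auto simp: bicomm_ids_def)
  from TB.subst[OF this, of ?s] show ?case
    by (simp add: subst_na_diff subst_mon_tsub)
next
  case (F2 p q r)
  let ?s = "\<lambda>i. mon ((\<lambda>i. if i = 1 then p else if i = 2 then q else r) i) :: 'k nalg"
  have "mon (Mul (Var 1) (Mul (Var 2) (Var 3))) - mon (Mul (Var 2) (Mul (Var 1) (Var 3))) \<in> (T_B :: 'k nalg set)"
    using bicomm_TB by (auto simp: bicomm_ids_def)
  from TB.subst[OF this, of ?s] show ?case
    by (simp add: subst_na_diff subst_mon_tsub)
next
  case (cL t u v)
  from TB.mulR[OF cL.IH, of "mon v"] show ?case by (simp add: mul_na_diff_left mul_na_mon)
next
  case (cR t u v)
  from TB.mulL[OF cR.IH, of "mon v"] show ?case by (simp add: mul_na_diff_right mul_na_mon)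
qed

declare bcr.trans[trans]

definition isMul :: "nmon \<Rightarrow> bool" where "isMul t = (case t of Var i \<Rightarrow> False | Mul a b \<Rightarrow> True)"

lemma isMul_simps [simp]: "isMul (Var i) = False" "isMul (Mul a b) = True"
  by (simp_all add: isMul_def)

lemma assoc: "isMul u \<Longrightarrow> Mul (Mul p u) s \<approx> Mul p (Mul u s)"
proof -
  assume "isMul u"
  then obtain q r where u: "u = Mul q r" by (cases u) auto
  have 1: "Mul (Mul p (Mul q r)) s \<approx> Mul (Mul q (Mul p r)) s" by (intro bcr.cL bcr.F2)
  have 2: "Mul (Mul q (Mul p r)) s \<approx> Mul (Mul q s) (Mul p r)" by (rule bcr.F1)
  have 3: "Mul (Mul q s) (Mul p r) \<approx> Mul p (Mul (Mul q s) r)" by (rule bcr.F2)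
  have 4: "Mul p (Mul (Mul q s) r) \<approx> Mul p (Mul (Mul q r) s)" by (intro bcr.cR bcr.F1)
  show ?thesis unfolding u by (meson 1 2 3 4 bcr.trans)
qed

definition cl :: "nat list \<Rightarrow> nmon \<Rightarrow> nmon" where
  "cl as w = foldr (\<lambda>x t. Mul (Var x) t) as w"
definition cr :: "nmon \<Rightarrow> nat list \<Rightarrow> nmon" where
  "cr w bs = foldl (\<lambda>t y. Mul t (Var y)) w bs"
definition NF :: "nat \<Rightarrow> nat list \<Rightarrow> nat \<Rightarrow> nat list \<Rightarrow> nmon" where
  "NF a as b bs = cl as (cr (Mul (Var a) (Var b)) bs)"

lemma cl_simps [simp]: "cl [] w = w" "cl (x # xs) w = Mul (Var x) (cl xs w)"
  "cl (xs @ ys) w = cl xs (cl ys w)"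
  by (simp_all add: cl_def)
lemma cr_simps [simp]: "cr w [] = w" "cr w (y # ys) = cr (Mul w (Var y)) ys"
  "cr w (xs @ ys) = cr (cr w xs) ys" "cr w (xs @ [y]) = Mul (cr w xs) (Var y)"
  by (simp_all add: cr_def)

lemma isMul_cl: "isMul w \<Longrightarrow> isMul (cl as w)"
  by (cases as) auto
lemma isMul_cr: "isMul w \<Longrightarrow> isMul (cr w bs)"
  by (induction bs arbitrary: w) auto

lemma cl_cong: "w \<approx> w' \<Longrightarrow> cl as w \<approx> cl as w'"
  by (induction as) (auto intro: bcr.cR)
lemma cr_cong: "w \<approx> w' \<Longrightarrow> cr w bs \<approx> cr w' bs"
  by (induction bs arbitrary: w w') (auto intro: bcr.cL)

lemma cl_move: "cl (ys @ x # zs) w \<approx> cl (x # ys @ zs) w"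
proof (induction ys)
  case Nil then show ?case by (simp add: bcr.refl)
next
  case (Cons y ys)
  have "cl ((y # ys) @ x # zs) w = Mul (Var y) (cl (ys @ x # zs) w)" by simp
  also have "\<dots> \<approx> Mul (Var y) (cl (x # ys @ zs) w)" by (intro bcr.cR Cons)
  also have "\<dots> = Mul (Var y) (Mul (Var x) (cl (ys @ zs) w))" by simp
  also have "\<dots> \<approx> Mul (Var x) (Mul (Var y) (cl (ys @ zs) w))" by (rule bcr.F2)
  finally show ?case by (simp add: bcr.trans)
qed

lemma cl_perm: "mset as = mset as' \<Longrightarrow> cl as w \<approx> cl as' w"
proof (induction as arbitrary: as')
  case Nil then show ?case by (simp add: bcr.refl)
next
  case (Cons x xs)
  then have "x \<in> set as'" by (metis list.set_intros(1) set_mset_mset)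
  then obtain ys zs where as': "as' = ys @ x # zs" by (meson split_list)
  have "mset xs = mset (ys @ zs)" using Cons.prems as' by simp
  then have "cl xs w \<approx> cl (ys @ zs) w" by (rule Cons.IH)
  then have "cl (x # xs) w \<approx> cl (x # ys @ zs) w" by (simp add: bcr.cR)
  moreover have "cl (x # ys @ zs) w \<approx> cl as' w" unfolding as' by (rule bcr.sym, rule cl_move)
  ultimately show ?case by (rule bcr.trans)
qed

lemma cr_move: "cr w (ys @ x # zs) \<approx> cr w (x # ys @ zs)"
proof (induction ys arbitrary: w)
  case Nil then show ?case by (simp add: bcr.refl)
next
  case (Cons y ys)
  have "cr w ((y # ys) @ x # zs) = cr (Mul w (Var y)) (ys @ x # zs)" by simp
  also have "\<dots> \<approx> cr (Mul w (Var y)) (x # ys @ zs)" by (rule Cons)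
  also have "\<dots> = cr (Mul (Mul w (Var y)) (Var x)) (ys @ zs)" by simp
  also have "\<dots> \<approx> cr (Mul (Mul w (Var x)) (Var y)) (ys @ zs)" by (intro cr_cong bcr.F1)
  finally show ?case by (simp add: bcr.trans)
qed

lemma cr_perm: "mset bs = mset bs' \<Longrightarrow> cr w bs \<approx> cr w bs'"
proof (induction bs arbitrary: bs' w)
  case Nil then show ?case by (simp add: bcr.refl)
next
  case (Cons x xs)
  then have "x \<in> set bs'" by (metis list.set_intros(1) set_mset_mset)
  then obtain ys zs where bs': "bs' = ys @ x # zs" by (meson split_list)
  have "mset xs = mset (ys @ zs)" using Cons.prems bs' by simp
  then have "cr (Mul w (Var x)) xs \<approx> cr (Mul w (Var x)) (ys @ zs)" by (rule Cons.IH)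
  then have "cr w (x # xs) \<approx> cr w (x # ys @ zs)" by simp
  moreover have "cr w (x # ys @ zs) \<approx> cr w bs'" unfolding bs' by (rule bcr.sym, rule cr_move)
  ultimately show ?case by (rule bcr.trans)
qed

lemma mul_cl: "Mul X (cl as W) \<approx> cl as (Mul X W)"
proof (induction as)
  case Nil then show ?case by (simp add: bcr.refl)
next
  case (Cons a as)
  have "Mul X (cl (a # as) W) \<approx> Mul (Var a) (Mul X (cl as W))" by (simp add: bcr.F2)
  also have "\<dots> \<approx> Mul (Var a) (cl as (Mul X W))" by (intro bcr.cR Cons)
  finally show ?case by (simp add: bcr.trans)
qed

lemma cl_mul_right: "isMul W \<Longrightarrow> Mul (cl as W) Y \<approx> cl as (Mul W Y)"
proof (induction as)
  case Nil then show ?case by (simp add: bcr.refl)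
next
  case (Cons a as)
  have "Mul (cl (a # as) W) Y \<approx> Mul (Var a) (Mul (cl as W) Y)"
    by (simp add: assoc isMul_cl Cons.prems)
  also have "\<dots> \<approx> Mul (Var a) (cl as (Mul W Y))" by (intro bcr.cR Cons)
  finally show ?case by (simp add: bcr.trans)
qed

lemma cr_cl: "isMul W \<Longrightarrow> cr (cl as W) bs \<approx> cl as (cr W bs)"
proof (induction bs arbitrary: W)
  case Nil then show ?case by (simp add: bcr.refl)
next
  case (Cons b bs)
  have "cr (cl as W) (b # bs) = cr (Mul (cl as W) (Var b)) bs" by simp
  also have "\<dots> \<approx> cr (cl as (Mul W (Var b))) bs" by (intro cr_cong cl_mul_right Cons.prems)
  also have "\<dots> \<approx> cl as (cr (Mul W (Var b)) bs)" by (rule Cons.IH) simp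
  finally show ?case by (simp add: bcr.trans)
qed

lemma mul_cr: "isMul W \<Longrightarrow> Mul X (cr W bs) \<approx> cr (Mul X W) bs"
proof (induction bs rule: rev_induct)
  case Nil then show ?case by (simp add: bcr.refl)
next
  case (snoc b bs)
  have "Mul X (cr W (bs @ [b])) = Mul X (Mul (cr W bs) (Var b))" by simp
  also have "\<dots> \<approx> Mul (Mul X (cr W bs)) (Var b)"
    by (rule bcr.sym, rule assoc, rule isMul_cr, rule snoc.prems)
  also have "\<dots> \<approx> Mul (cr (Mul X W) bs) (Var b)" by (intro bcr.cL snoc.IH snoc.prems)
  finally show ?case by (simp add: bcr.trans)
qed

lemma core_left_swap: "Mul (Var c) (cr (Mul (Var a) (Var b)) bs) \<approx> Mul (Var a) (cr (Mul (Var c) (Var b)) bs)"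
proof (induction bs rule: rev_induct)
  case Nil then show ?case by (simp add: bcr.F2)
next
  case (snoc y bs)
  have "Mul (Var c) (cr (Mul (Var a) (Var b)) (bs @ [y])) \<approx> Mul (Mul (Var c) (cr (Mul (Var a) (Var b)) bs)) (Var y)"
    by (simp, rule bcr.sym, rule assoc, rule isMul_cr, simp)
  also have "\<dots> \<approx> Mul (Mul (Var a) (cr (Mul (Var c) (Var b)) bs)) (Var y)" by (intro bcr.cL snoc)
  also have "\<dots> \<approx> Mul (Var a) (cr (Mul (Var c) (Var b)) (bs @ [y]))"
    by (simp, rule assoc, rule isMul_cr, simp)
  finally show ?case by (simp add: bcr.trans)
qed

lemma NF_perm:
  assumes "mset (a # as) = mset (a' # as')" "mset (b # bs) = mset (b' # bs')"
  shows "NF a as b bs \<approx> NF a' as' b' bs'"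
proof -
  have R: "cr (Mul (Var x) (Var b)) bs \<approx> cr (Mul (Var x) (Var b')) bs'" for x
  proof (cases "b = b'")
    case True
    then show ?thesis using assms(2) by (simp add: cr_perm)
  next
    case False
    then have "b' \<in> set bs" using assms(2)
      by (metis insert_iff list.set(2) set_mset_mset)
    then obtain ys zs where bs: "bs = ys @ b' # zs" by (meson split_list)
    have "cr (Mul (Var x) (Var b)) bs \<approx> cr (Mul (Var x) (Var b)) (b' # ys @ zs)"
      unfolding bs by (rule cr_move)
    also have "\<dots> \<approx> cr (Mul (Var x) (Var b')) (b # ys @ zs)" by (simp add: cr_cong bcr.F1)
    also have "\<dots> \<approx> cr (Mul (Var x) (Var b')) bs'"
      using assms(2) bs by (intro cr_perm) (simp add: add_mset_commute)
    finally show ?thesis by (simp add: bcr.trans)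
  qed
  show ?thesis
  proof (cases "a = a'")
    case True
    then have "mset as = mset as'" using assms(1) by simp
    then have "cl as (cr (Mul (Var a) (Var b)) bs) \<approx> cl as' (cr (Mul (Var a) (Var b)) bs)" by (rule cl_perm)
    also have "\<dots> \<approx> cl as' (cr (Mul (Var a') (Var b')) bs')" using True R[of a] by (intro cl_cong) simp
    finally show ?thesis by (simp add: NF_def bcr.trans)
  next
    case False
    then have "a' \<in> set as" using assms(1)
      by (metis insert_iff list.set(2) set_mset_mset)
    then obtain ys zs where as: "as = ys @ a' # zs" by (meson split_list)
    let ?W = "cr (Mul (Var a) (Var b)) bs"
    have "cl as ?W \<approx> cl (a' # ys @ zs) ?W" unfolding as by (rule cl_move)
    also have "\<dots> = Mul (Var a') (cl (ys @ zs) ?W)" by simp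
    also have "\<dots> \<approx> cl (ys @ zs) (Mul (Var a') ?W)" by (rule mul_cl)
    also have "\<dots> \<approx> cl (ys @ zs) (Mul (Var a) (cr (Mul (Var a') (Var b)) bs))"
      by (intro cl_cong core_left_swap)
    also have "\<dots> \<approx> Mul (Var a) (cl (ys @ zs) (cr (Mul (Var a') (Var b)) bs))"
      by (rule bcr.sym, rule mul_cl)
    also have "\<dots> = cl (a # ys @ zs) (cr (Mul (Var a') (Var b)) bs)" by simp
    also have "\<dots> \<approx> cl as' (cr (Mul (Var a') (Var b)) bs)"
      using assms(1) as by (intro cl_perm) (simp add: add_mset_commute)
    also have "\<dots> \<approx> cl as' (cr (Mul (Var a') (Var b')) bs')" by (intro cl_cong R)
    finally show ?thesis by (simp add: NF_def bcr.trans)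
  qed
qed


fun Lm :: "nmon \<Rightarrow> nat multiset" where
  "Lm (Var i) = {#}"
| "Lm (Mul a b) = (case a of Var i \<Rightarrow> {#i#} | Mul _ _ \<Rightarrow> Lm a) + Lm b"

definition lam :: "nmon \<Rightarrow> nat multiset" where
  "lam t = (case t of Var i \<Rightarrow> {#i#} | Mul _ _ \<Rightarrow> Lm t)"

abbreviation LV :: "nmon \<Rightarrow> nat multiset" where "LV t \<equiv> mset (leaves t)"

lemma lam_simps [simp]: "lam (Var i) = {#i#}" "lam (Mul a b) = Lm (Mul a b)"
  by (simp_all add: lam_def)

lemma Lm_Mul: "Lm (Mul a b) = lam a + Lm b"
  by (cases a) (simp_all add: lam_def)

declare Lm.simps(2)[simp del]

lemma Lm_sub: "Lm t \<subseteq># LV t" and lam_sub: "lam t \<subseteq># LV t"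
proof (induction t)
  case (Var x)
  { case 1 then show ?case by simp next case 2 then show ?case by simp }
next
  case (Mul t1 t2)
  { case 1 then show ?case using Mul by (simp add: Lm_Mul subset_mset.add_mono)
  next case 2 then show ?case using Mul by (simp add: Lm_Mul subset_mset.add_mono) }
qed

lemma lam_ne: "lam t \<noteq> {#}"
  by (induction t) (simp_all add: Lm_Mul)

lemma Lm_ne: "isMul t \<Longrightarrow> Lm t \<noteq> {#}"
  using lam_ne[of t] by (cases t) (simp_all add: Lm_Mul)

lemma mdiff_pp: "C \<subseteq># A \<Longrightarrow> D \<subseteq># B \<Longrightarrow> (A + B) - (C + D) = (A - C) + (B - D)"
  by (auto simp: multiset_eq_iff subseteq_mset_def)

lemma R_ne: "isMul t \<Longrightarrow> LV t - Lm t \<noteq> {#}"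
proof (induction t)
  case (Var x) then show ?case by simp
next
  case (Mul a b)
  show ?case
  proof (cases b)
    case (Var j)
    have "LV (Mul a b) - Lm (Mul a b) = (LV a + {#j#}) - (lam a + {#})"
      by (simp add: Lm_Mul Var)
    also have "\<dots> = (LV a - lam a) + ({#j#} - {#})"
      by (rule mdiff_pp[OF lam_sub]) simp
    finally show ?thesis by simp
  next
    case (Mul x y)
    then have "isMul b" by simp
    have "LV (Mul a b) - Lm (Mul a b) = (LV a + LV b) - (lam a + Lm b)"
      by (simp add: Lm_Mul)
    also have "\<dots> = (LV a - lam a) + (LV b - Lm b)"
      by (rule mdiff_pp[OF lam_sub Lm_sub])
    finally show ?thesis using Mul.IH(2)[OF \<open>isMul b\<close>] by simp
  qed
qed

lemma Lm_cl: "isMul W \<Longrightarrow> Lm (cl as W) = mset as + Lm W"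
  by (induction as) (auto simp: Lm_Mul isMul_cl)
lemma Lm_cr: "isMul W \<Longrightarrow> Lm (cr W bs) = Lm W"
  by (induction bs arbitrary: W) (auto simp: Lm_Mul lam_def split: nmon.split)
lemma LV_cl: "LV (cl as W) = mset as + LV W"
  by (induction as) auto
lemma LV_cr: "LV (cr W bs) = LV W + mset bs"
  by (induction bs arbitrary: W) auto

lemma Lm_NF: "Lm (NF a as b bs) = mset (a # as)"
  by (simp add: NF_def Lm_cl isMul_cr Lm_cr Lm_Mul)
lemma LV_NF: "LV (NF a as b bs) = mset (a # as) + mset (b # bs)"
  by (simp add: NF_def LV_cl LV_cr)
lemma isMul_NF: "isMul (NF a as b bs)"
  by (simp add: NF_def isMul_cl isMul_cr)

lemma NF_mulVar: "Mul (NF a as b bs) (Var j) \<approx> NF a as b (bs @ [j])"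
  unfolding NF_def by (simp, rule cl_mul_right, rule isMul_cr, simp)

lemma NF_exists: "isMul t \<Longrightarrow> \<exists>a as b bs. t \<approx> NF a as b bs"
proof (induction t)
  case (Var x) then show ?case by simp
next
  case (Mul x y)
  show ?case
  proof (cases x)
    case (Var i)
    show ?thesis
    proof (cases y)
      case (Var j)
      have "Mul x y = NF i [] j []" by (simp add: NF_def \<open>x = Var i\<close> Var)
      then show ?thesis by (metis bcr.refl)
    next
      case (Mul y1 y2)
      then obtain a as b bs where "y \<approx> NF a as b bs" using Mul.IH(2) by auto
      then have "Mul x y \<approx> Mul (Var i) (NF a as b bs)" by (simp add: \<open>x = Var i\<close> bcr.cR)
      also have "\<dots> = NF a (i # as) b bs" by (simp add: NF_def)
      finally show ?thesis by blast
    qed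
  next
    case (Mul x1 x2)
    then obtain a1 as1 b1 bs1 where x: "x \<approx> NF a1 as1 b1 bs1" using Mul.IH(1) by auto
    show ?thesis
    proof (cases y)
      case (Var j)
      have "Mul x y \<approx> Mul (NF a1 as1 b1 bs1) (Var j)" using x by (simp add: Var bcr.cL)
      also have "\<dots> \<approx> NF a1 as1 b1 (bs1 @ [j])" by (rule NF_mulVar)
      finally show ?thesis by blast
    next
      case (Mul y1 y2)
      then obtain a2 as2 b2 bs2 where y: "y \<approx> NF a2 as2 b2 bs2" using Mul.IH(2) by auto
      let ?N1 = "NF a1 as1 b1 bs1"
      have "Mul x y \<approx> Mul ?N1 y" using x by (rule bcr.cL)
      also have "\<dots> \<approx> Mul ?N1 (NF a2 as2 b2 bs2)" using y by (rule bcr.cR)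
      also have "\<dots> \<approx> cl as2 (Mul ?N1 (cr (Mul (Var a2) (Var b2)) bs2))"
        unfolding NF_def[of a2] by (rule mul_cl)
      also have "\<dots> \<approx> cl as2 (cr (Mul ?N1 (Mul (Var a2) (Var b2))) bs2)"
        by (intro cl_cong mul_cr) simp
      also have "\<dots> \<approx> cl as2 (cr (Mul (Var a2) (Mul ?N1 (Var b2))) bs2)"
        by (intro cl_cong cr_cong bcr.F2)
      also have "\<dots> \<approx> cl as2 (cr (Mul (Var a2) (NF a1 as1 b1 (bs1 @ [b2]))) bs2)"
        by (intro cl_cong cr_cong bcr.cR NF_mulVar)
      also have "\<dots> = cl as2 (cr (cl (a2 # as1) (cr (Mul (Var a1) (Var b1)) (bs1 @ [b2]))) bs2)"
        by (simp add: NF_def)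
      also have "\<dots> \<approx> cl as2 (cl (a2 # as1) (cr (cr (Mul (Var a1) (Var b1)) (bs1 @ [b2])) bs2))"
        by (intro cl_cong cr_cl isMul_cr) simp
      also have "\<dots> = NF a1 (as2 @ a2 # as1) b1 (bs1 @ b2 # bs2)"
        by (simp add: NF_def del: cl_simps(2) cr_simps(4))
      finally show ?thesis by blast
    qed
  qed
qed

lemma leaves_ne: "length (leaves t) \<ge> 1"
  by (induction t) auto

lemma size_LV_ge2: "isMul t \<Longrightarrow> size (LV t) \<ge> 2"
proof (cases t)
  case (Mul a b) then show ?thesis using leaves_ne[of a] leaves_ne[of b] by simp
qed simp

lemma isMul_LV: "LV t = LV u \<Longrightarrow> isMul t \<Longrightarrow> isMul u"
  by (cases u) (use size_LV_ge2[of t] in auto)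

lemma bcr_inv: "t \<approx> u \<Longrightarrow> LV t = LV u \<and> Lm t = Lm u \<and> isMul t = isMul u"
proof (induction rule: bcr.induct)
  case (cL t u v)
  have h: "LV t = LV u" "Lm t = Lm u" "isMul t = isMul u" using cL.IH by auto
  have "lam t = lam u"
  proof (cases t)
    case (Var i)
    then obtain j where u: "u = Var j" using h(3) by (cases u) auto
    then show ?thesis using h(1) Var by simp
  next
    case (Mul a b)
    then obtain c d where u: "u = Mul c d" using h(3) by (cases u) auto
    then show ?thesis using h(2) Mul by (simp only: lam_simps)
  qed
  then show ?case using h by (simp add: Lm_Mul)
next
  case (cR t u v)
  have h: "LV t = LV u" "Lm t = Lm u" "isMul t = isMul u" using cR.IH by auto
  then show ?case by (simp add: Lm_Mul)
next
  case (refl t) show ?case by simp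
next
  case (sym t u) then show ?case by metis
next
  case (trans t u v) then show ?case by metis
next
  case (F1 p q r) show ?case by (simp add: Lm_Mul ac_simps)
next
  case (F2 p q r) show ?case by (simp add: Lm_Mul ac_simps)
qed

lemma class_cong:
  assumes "LV t = LV u" "Lm t = Lm u"
  shows "t \<approx> u"
proof (cases "isMul t")
  case True
  then have "isMul u" using isMul_LV assms by blast
  obtain a as b bs where t: "t \<approx> NF a as b bs" using NF_exists True by blast
  obtain a' as' b' bs' where u: "u \<approx> NF a' as' b' bs'" using NF_exists \<open>isMul u\<close> by blast
  have st: "LV t = LV (NF a as b bs)" "Lm t = Lm (NF a as b bs)"
    and su: "LV u = LV (NF a' as' b' bs')" "Lm u = Lm (NF a' as' b' bs')"
    using bcr_inv[OF t] bcr_inv[OF u] by auto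
  have "NF a as b bs \<approx> NF a' as' b' bs'"
  proof (rule NF_perm)
    show *: "mset (a # as) = mset (a' # as')" using st su assms by (simp only: Lm_NF)
    have "LV (NF a as b bs) = LV (NF a' as' b' bs')" using st su assms by simp
    then have "mset (a # as) + mset (b # bs) = mset (a' # as') + mset (b' # bs')" by (simp only: LV_NF)
    then show "mset (b # bs) = mset (b' # bs')" using * by (simp only: add_left_cancel)
  qed
  then show ?thesis using t u by (meson bcr.sym bcr.trans)
next
  case False
  then obtain i where "t = Var i" by (cases t) auto
  then have "u = Var i" using assms(1) isMul_LV[of u t] by (cases u) auto
  then show ?thesis using \<open>t = Var i\<close> by (simp add: bcr.refl)
qed


section \<open>Extraction of components (finite differences)\<close>

lemma tri_swap:
  "(\<Sum>e\<le>n. \<Sum>j<e. f j e) = (\<Sum>j<n. \<Sum>e\<in>{Suc j..n}. f j e)" for f :: "nat \<Rightarrow> nat \<Rightarrow> 'a::comm_monoid_add"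
proof (induction n)
  case 0 then show ?case by simp
next
  case (Suc n)
  have "(\<Sum>j<Suc n. \<Sum>e\<in>{Suc j..Suc n}. f j e) = (\<Sum>j<Suc n. (\<Sum>e\<in>{Suc j..n}. f j e) + f j (Suc n))"
    by (rule sum.cong[OF HOL.refl], subst sum.cl_ivl_Suc, auto)
  also have "\<dots> = (\<Sum>j<n. \<Sum>e\<in>{Suc j..n}. f j e) + (\<Sum>j<Suc n. f j (Suc n))"
    by (simp add: sum.distrib)
  finally show ?case using Suc by simp
qed

lemma binom_diff_identity:
  fixes c :: "'k::field_char_0" and a :: "nat \<Rightarrow> 'k"
  shows "(\<Sum>e\<le>n. ((c + 1)^e - c^e) * a e) =
         (\<Sum>j<n. c^j * (\<Sum>e\<in>{Suc j..n}. of_nat (e choose j) * a e))"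
proof -
  have "(c + 1)^e - c^e = (\<Sum>j<e. of_nat (e choose j) * c^j)" for e
  proof -
    have "(c + 1)^e = (\<Sum>j\<le>e. of_nat (e choose j) * c^j)"
      by (simp add: binomial_ring mult.commute)
    also have "\<dots> = (\<Sum>j<e. of_nat (e choose j) * c^j) + c^e"
      by (simp add: lessThan_Suc_atMost[symmetric])
    finally show ?thesis by simp
  qed
  then have "(\<Sum>e\<le>n. ((c + 1)^e - c^e) * a e) = (\<Sum>e\<le>n. \<Sum>j<e. of_nat (e choose j) * c^j * a e)"
    by (simp add: sum_distrib_right)
  also have "\<dots> = (\<Sum>j<n. \<Sum>e\<in>{Suc j..n}. of_nat (e choose j) * c^j * a e)"
    by (rule tri_swap)
  also have "\<dots> = (\<Sum>j<n. c^j * (\<Sum>e\<in>{Suc j..n}. of_nat (e choose j) * a e))"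
    by (simp add: sum_distrib_left ac_simps)
  finally show ?thesis .
qed

lemma extract_comp:
  fixes v :: "nat \<Rightarrow> 'k::field_char_0 nalg"
  assumes TI: "T_ideal I"
  assumes "\<And>c::nat. (\<Sum>e\<le>m. smult_na ((of_nat c)^e) (v e)) \<in> I"
  shows "e \<le> m \<Longrightarrow> v e \<in> I"
  using assms(2)
proof (induction m arbitrary: v e)
  case 0 then show ?case by simp
next
  case (Suc m)
  interpret Tid I by unfold_locales (rule TI)
  define w where "w c = (\<Sum>e\<le>Suc m. smult_na ((of_nat c)^e) (v e))" for c :: nat
  define v' where "v' j = (\<Sum>e\<in>{Suc j..Suc m}. smult_na (of_nat (e choose j)) (v e))" for j
  have lw: "Poly_Mapping.lookup (w c) t = (\<Sum>e\<le>Suc m. (of_nat c)^e * Poly_Mapping.lookup (v e) t)" for c t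
    by (simp add: w_def lookup_sum del: sum.atMost_Suc)
  have wdiff: "w (Suc c) - w c = (\<Sum>j\<le>m. smult_na ((of_nat c)^j) (v' j))" for c
  proof (rule poly_mapping_eqI)
    fix t
    have "Poly_Mapping.lookup (w (Suc c) - w c) t =
        (\<Sum>e\<le>Suc m. ((of_nat c + 1)^e - (of_nat c)^e) * Poly_Mapping.lookup (v e) t)"
      unfolding lookup_minus lw by (simp only: of_nat_Suc left_diff_distrib sum_subtractf add.commute)
    also have "\<dots> = (\<Sum>j<Suc m. (of_nat c)^j * (\<Sum>e\<in>{Suc j..Suc m}. of_nat (e choose j) * Poly_Mapping.lookup (v e) t))"
      by (rule binom_diff_identity)
    also have "\<dots> = Poly_Mapping.lookup (\<Sum>j\<le>m. smult_na ((of_nat c)^j) (v' j)) t"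
      by (simp add: v'_def lookup_sum lookup_add lessThan_Suc_atMost)
    finally show "Poly_Mapping.lookup (w (Suc c) - w c) t = Poly_Mapping.lookup (\<Sum>j\<le>m. smult_na ((of_nat c)^j) (v' j)) t" .
  qed
  have wI: "w c \<in> I" for c using Suc.prems(2) by (simp add: w_def)
  have "(\<Sum>j\<le>m. smult_na ((of_nat c)^j) (v' j)) \<in> I" for c
  proof -
    have "w (Suc c) - w c \<in> I" by (rule local.diff[OF wI wI])
    then show ?thesis by (simp only: wdiff)
  qed
  then have "v' m \<in> I" using Suc.IH[of m v'] by auto
  moreover have "v' m = smult_na (of_nat (Suc m)) (v (Suc m))"
    by (simp add: v'_def del: of_nat_Suc)
  ultimately have top: "v (Suc m) \<in> I" using smult_iff[of "of_nat (Suc m)" "v (Suc m)"] by (simp del: of_nat_Suc)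
  have "(\<Sum>e\<le>m. smult_na ((of_nat c)^e) (v e)) = w c - smult_na ((of_nat c)^(Suc m)) (v (Suc m))" for c
    by (simp add: w_def)
  then have "(\<Sum>e\<le>m. smult_na ((of_nat c)^e) (v e)) \<in> I" for c
    using wI top by (simp add: local.diff smult)
  then show ?case using Suc.IH top Suc.prems(1) by (cases "e = Suc m") auto
qed


definition cnt :: "nat \<Rightarrow> nmon \<Rightarrow> nat" where "cnt j t = count (LV t) j"

definition part :: "nat \<Rightarrow> nat \<Rightarrow> 'k::field nalg \<Rightarrow> 'k nalg" where
  "part j e p = (\<Sum>t\<in>{t\<in>Poly_Mapping.keys p. cnt j t = e}. smult_na (Poly_Mapping.lookup p t) (mon t))"

lemma lookup_part: "Poly_Mapping.lookup (part j e p) u = (if cnt j u = e then Poly_Mapping.lookup p u else 0)"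
proof -
  have "Poly_Mapping.lookup (part j e p) u =
      (\<Sum>t\<in>{t\<in>Poly_Mapping.keys p. cnt j t = e}. if t = u then Poly_Mapping.lookup p t else 0)"
    unfolding part_def lookup_sum by (intro sum.cong) (auto simp: lookup_mon)
  also have "\<dots> = (if cnt j u = e then Poly_Mapping.lookup p u else 0)"
    by (auto simp: sum.delta in_keys_iff)
  finally show ?thesis .
qed

lemma keys_part: "t \<in> Poly_Mapping.keys (part j e p) \<Longrightarrow> t \<in> Poly_Mapping.keys p \<and> cnt j t = e"
  by (auto simp: in_keys_iff lookup_part split: if_splits)

lemma part_add: "part j e (p + q) = part j e p + part j e q"
  by (rule poly_mapping_eqI) (simp add: lookup_part lookup_add)
lemma part_smult: "part j e (smult_na c p) = smult_na c (part j e p)"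
  by (rule poly_mapping_eqI) (simp add: lookup_part)
lemma part_zero [simp]: "part j e 0 = 0"
  by (rule poly_mapping_eqI) (simp add: lookup_part)
lemma part_sum_lin: "part j e (sum f A) = (\<Sum>x\<in>A. part j e (f x))"
  by (induction A rule: infinite_finite_induct) (simp_all add: part_add)

lemma part_decomp:
  assumes "\<forall>t\<in>Poly_Mapping.keys p. cnt j t \<le> M"
  shows "p = (\<Sum>e\<le>M. part j e p)"
proof (rule poly_mapping_eqI)
  fix u
  have "Poly_Mapping.lookup (\<Sum>e\<le>M. part j e p) u = (\<Sum>e\<le>M. if cnt j u = e then Poly_Mapping.lookup p u else 0)"
    by (simp add: lookup_sum lookup_part)
  also have "\<dots> = Poly_Mapping.lookup p u"
    using assms by (auto simp: sum.delta in_keys_iff)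
  finally show "Poly_Mapping.lookup p u = Poly_Mapping.lookup (\<Sum>e\<le>M. part j e p) u" by simp
qed

lemma cnt_Mul [simp]: "cnt j (Mul a b) = cnt j a + cnt j b"
  by (simp add: cnt_def)
lemma cnt_Var [simp]: "cnt j (Var i) = (if i = j then 1 else 0)"
  by (simp add: cnt_def)

definition sc :: "nat \<Rightarrow> 'k::field \<Rightarrow> nat \<Rightarrow> 'k nalg" where
  "sc j c = (\<lambda>i. if i = j then smult_na c (mon (Var i)) else mon (Var i))"

lemma subst_mon_sc: "subst_mon (sc j c) t = smult_na (c ^ cnt j t) (mon t)"
  by (induction t) (simp_all add: sc_def mul_na_smult_left mul_na_smult_right mul_na_mon power_add mult.commute)

lemma lookup_subst_na: "Poly_Mapping.lookup (subst_na s p) u =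
   (\<Sum>t\<in>Poly_Mapping.keys p. Poly_Mapping.lookup p t * Poly_Mapping.lookup (subst_mon s t) u)"
  by (simp add: subst_na_def lookup_sum)

lemma subst_sc:
  assumes "\<forall>t\<in>Poly_Mapping.keys p. cnt j t \<le> M"
  shows "subst_na (sc j c) p = (\<Sum>e\<le>M. smult_na (c^e) (part j e p))"
proof (rule poly_mapping_eqI)
  fix u
  have "Poly_Mapping.lookup (subst_na (sc j c) p) u =
      (\<Sum>t\<in>Poly_Mapping.keys p. if t = u then Poly_Mapping.lookup p t * c ^ cnt j t else 0)"
    unfolding lookup_subst_na subst_mon_sc by (intro sum.cong) (auto simp: lookup_mon)
  also have "\<dots> = Poly_Mapping.lookup p u * c ^ cnt j u"
    by (auto simp: sum.delta in_keys_iff)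
  also have "\<dots> = (\<Sum>e\<le>M. if e = cnt j u then c^e * Poly_Mapping.lookup p u else 0)"
  proof (cases "u \<in> Poly_Mapping.keys p")
    case True
    then have "cnt j u \<in> {..M}" using assms by auto
    then show ?thesis by (simp add: sum.delta mult.commute)
  next
    case False then show ?thesis by (simp add: in_keys_iff)
  qed
  also have "\<dots> = (\<Sum>e\<le>M. c^e * (if cnt j u = e then Poly_Mapping.lookup p u else 0))"
    by (intro sum.cong) auto
  finally show "Poly_Mapping.lookup (subst_na (sc j c) p) u =
      Poly_Mapping.lookup (\<Sum>e\<le>M. smult_na (c^e) (part j e p)) u"
    by (simp add: lookup_sum lookup_part)
qed

lemma part_in:
  fixes p :: "'k::field_char_0 nalg"
  assumes TI: "T_ideal I" and p: "p \<in> I"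
  shows "part j e p \<in> I"
proof -
  interpret Tid I by unfold_locales (rule TI)
  define M where "M = Max (insert 0 (cnt j ` Poly_Mapping.keys p))"
  have M: "\<forall>t\<in>Poly_Mapping.keys p. cnt j t \<le> M" unfolding M_def by auto
  show ?thesis
  proof (cases "e \<le> M")
    case True
    have "(\<Sum>e\<le>M. smult_na ((of_nat c)^e) (part j e p)) \<in> I" for c :: nat
      using subst[OF p, of "sc j (of_nat c)"] subst_sc[OF M] by simp
    from extract_comp[OF TI this True] show ?thesis .
  next
    case False
    have "part j e p = 0"
      by (rule poly_mapping_eqI) (use M False in \<open>auto simp: lookup_part in_keys_iff\<close>)
    then show ?thesis by (simp add: zero)
  qed
qed

section \<open>Multihomogenization\<close>

lemma homog_J:
  fixes p :: "'k::field_char_0 nalg"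
  assumes TI: "T_ideal TV" and p: "p \<in> TV" "p \<notin> T_B" and J: "finite J"
  shows "\<exists>q. q \<in> TV \<and> q \<notin> T_B \<and> Poly_Mapping.keys q \<subseteq> Poly_Mapping.keys p \<and>
     (\<forall>j\<in>J. \<forall>t\<in>Poly_Mapping.keys q. \<forall>u\<in>Poly_Mapping.keys q. cnt j t = cnt j u)"
  using J
proof (induction J rule: finite_induct)
  case empty then show ?case using p by blast
next
  case (insert j J)
  then obtain q where q: "q \<in> TV" "q \<notin> T_B" "Poly_Mapping.keys q \<subseteq> Poly_Mapping.keys p"
    "\<forall>j\<in>J. \<forall>t\<in>Poly_Mapping.keys q. \<forall>u\<in>Poly_Mapping.keys q. cnt j t = cnt j u" by blast
  define M where "M = Max (insert 0 (cnt j ` Poly_Mapping.keys q))"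
  have M: "\<forall>t\<in>Poly_Mapping.keys q. cnt j t \<le> M" unfolding M_def by auto
  have "\<exists>e\<le>M. part j e q \<notin> T_B"
  proof (rule ccontr)
    assume "\<not> ?thesis"
    then have "(\<Sum>e\<le>M. part j e q) \<in> T_B" by (auto intro: TB.sum)
    then show False using part_decomp[OF M] q(2) by simp
  qed
  then obtain e where e: "part j e q \<notin> T_B" by blast
  show ?case
  proof (intro exI conjI)
    show "part j e q \<in> TV" by (rule part_in[OF TI q(1)])
    show "part j e q \<notin> T_B" by (rule e)
    show "Poly_Mapping.keys (part j e q) \<subseteq> Poly_Mapping.keys p" using q(3) keys_part by blast
    show "\<forall>i\<in>insert j J. \<forall>t\<in>Poly_Mapping.keys (part j e q). \<forall>u\<in>Poly_Mapping.keys (part j e q). cnt i t = cnt i u"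
    proof (intro ballI)
      fix i t u assume i: "i \<in> insert j J" and t: "t \<in> Poly_Mapping.keys (part j e q)"
        and u: "u \<in> Poly_Mapping.keys (part j e q)"
      from keys_part[OF t] keys_part[OF u] have "t \<in> Poly_Mapping.keys q" "u \<in> Poly_Mapping.keys q"
        "cnt j t = e" "cnt j u = e" by auto
      then show "cnt i t = cnt i u" using i q(4) by auto
    qed
  qed
qed

lemma homog:
  fixes p :: "'k::field_char_0 nalg"
  assumes TI: "T_ideal TV" and p: "p \<in> TV" "p \<notin> T_B"
  shows "\<exists>q. q \<in> TV \<and> q \<notin> T_B \<and> Poly_Mapping.keys q \<subseteq> Poly_Mapping.keys p \<and>
     (\<forall>t\<in>Poly_Mapping.keys q. \<forall>u\<in>Poly_Mapping.keys q. LV t = LV u)"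
proof -
  define J where "J = (\<Union>t\<in>Poly_Mapping.keys p. set (leaves t))"
  have "finite J" unfolding J_def by auto
  from homog_J[OF TI p this] obtain q where q: "q \<in> TV" "q \<notin> T_B" "Poly_Mapping.keys q \<subseteq> Poly_Mapping.keys p"
    "\<forall>j\<in>J. \<forall>t\<in>Poly_Mapping.keys q. \<forall>u\<in>Poly_Mapping.keys q. cnt j t = cnt j u" by blast
  have "LV t = LV u" if "t \<in> Poly_Mapping.keys q" "u \<in> Poly_Mapping.keys q" for t u
  proof (rule multiset_eqI)
    fix x
    show "count (LV t) x = count (LV u) x"
    proof (cases "x \<in> J")
      case True
      have "cnt x t = cnt x u" using q(4) True that by blast
      then show ?thesis by (simp only: cnt_def)
    next
      case False
      then have "x \<notin> set (leaves t)" "x \<notin> set (leaves u)" using that q(3) by (auto simp: J_def)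
      then have "count (LV t) x = 0" "count (LV u) x = 0"
        by (metis count_eq_zero_iff set_mset_mset)+
      then show ?thesis by (simp only:)
    qed
  qed
  then show ?thesis using q by blast
qed


section \<open>Linearization\<close>

lemma part_mul0: "part N 0 (mul_na p q) = mul_na (part N 0 p) (part N 0 q)"
  by (rule poly_mapping_eqI) (simp add: lookup_part lookup_mul_na split: nmon.split)

lemma part_mul1: "part N (Suc 0) (mul_na p q) = mul_na (part N (Suc 0) p) (part N 0 q) + mul_na (part N 0 p) (part N (Suc 0) q)"
proof (rule poly_mapping_eqI)
  fix u
  show "Poly_Mapping.lookup (part N (Suc 0) (mul_na p q)) u =
    Poly_Mapping.lookup (mul_na (part N (Suc 0) p) (part N 0 q) + mul_na (part N 0 p) (part N (Suc 0) q)) u"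
  proof (cases u)
    case (Var i) then show ?thesis by (simp add: lookup_part lookup_mul_na lookup_add)
  next
    case (Mul a b)
    then show ?thesis
      by (auto simp: lookup_part lookup_mul_na lookup_add add_is_1)
  qed
qed

definition tau :: "nat \<Rightarrow> nat \<Rightarrow> nat \<Rightarrow> 'k::field nalg" where
  "tau j N = (\<lambda>i. if i = j then mon (Var j) + mon (Var N) else mon (Var i))"

definition rho :: "nat \<Rightarrow> nat \<Rightarrow> nat \<Rightarrow> 'k::field nalg" where
  "rho N j = (\<lambda>i. if i = N then mon (Var j) else mon (Var i))"

fun DD :: "nat \<Rightarrow> nat \<Rightarrow> nmon \<Rightarrow> 'k::field nalg" where
  "DD j N (Var i) = (if i = j then mon (Var N) else 0)"
| "DD j N (Mul a b) = mul_na (DD j N a) (mon b) + mul_na (mon a) (DD j N b)"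

lemma part_mon: "part N e (mon t) = (if cnt N t = e then mon t else 0)"
  by (rule poly_mapping_eqI) (simp add: lookup_part lookup_mon)

lemma part_tau:
  assumes "N \<notin># LV t" "j \<noteq> N"
  shows "part N 0 (subst_mon (tau j N) t) = (mon t :: 'k::field nalg) \<and>
         part N (Suc 0) (subst_mon (tau j N) t) = (DD j N t :: 'k nalg)"
  using assms
proof (induction t)
  case (Var i)
  then show ?case by (simp add: tau_def part_add part_mon)
next
  case (Mul a b)
  then show ?case by (simp add: part_mul0 part_mul1 mul_na_mon)
qed

lemma subst_rho_mon: "N \<notin># LV t \<Longrightarrow> subst_mon (rho N j) t = (mon t :: 'k::field nalg)"
  by (induction t) (auto simp: rho_def mul_na_mon)

lemma subst_rho_DD:
  assumes "N \<notin># LV t"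
  shows "subst_na (rho N j) (DD j N t) = smult_na (of_nat (cnt j t)) (mon t :: 'k::field nalg)"
  using assms
proof (induction t)
  case (Var i) then show ?case by (auto simp: rho_def)
next
  case (Mul a b)
  then show ?case
    by (simp add: subst_na_add subst_na_mul subst_rho_mon mul_na_smult_left mul_na_smult_right
        mul_na_mon smult_na_add_left)
qed

lemma keys_DD:
  "u \<in> Poly_Mapping.keys (DD j N t :: 'k::field nalg) \<Longrightarrow> j \<in># LV t \<and> LV u = LV t - {#j#} + {#N#}"
proof (induction t arbitrary: u)
  case (Var i) then show ?case by (auto simp: mon_def split: if_splits)
next
  case (Mul a b)
  then consider "u \<in> Poly_Mapping.keys (mul_na (DD j N a :: 'k nalg) (mon b))"
    | "u \<in> Poly_Mapping.keys (mul_na (mon a) (DD j N b :: 'k nalg))"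
    using keys_add by fastforce
  then show ?case
  proof cases
    case 1
    then obtain a' b' where u: "u = Mul a' b'" "a' \<in> Poly_Mapping.keys (DD j N a :: 'k nalg)"
      "b' \<in> Poly_Mapping.keys (mon b :: 'k nalg)" using keys_mul_na by blast
    then have "b' = b" by (simp add: mon_def)
    from Mul.IH(1)[OF u(2)] show ?thesis using u \<open>b' = b\<close>
      by (auto simp: multiset_eq_iff)
  next
    case 2
    then obtain a' b' where u: "u = Mul a' b'" "a' \<in> Poly_Mapping.keys (mon a :: 'k nalg)"
      "b' \<in> Poly_Mapping.keys (DD j N b :: 'k nalg)" using keys_mul_na by blast
    then have "a' = a" by (simp add: mon_def)
    from Mul.IH(2)[OF u(3)] show ?thesis using u \<open>a' = a\<close>
      by (auto simp: multiset_eq_iff)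
  qed
qed


lemma card_set_mset_le: "card (set_mset X) \<le> size X"
proof (induction X)
  case empty then show ?case by simp
next
  case (add x X)
  have "card (set_mset (add_mset x X)) \<le> Suc (card (set_mset X))"
    by (simp add: card_insert_le_m1 card_insert_if)
  then show ?case using add by simp
qed

lemma card_lt_size: "count M j \<ge> 2 \<Longrightarrow> card (set_mset M) < size M"
proof -
  assume c: "count M j \<ge> 2"
  have "count {#j#} j < count M j" using c by simp
  then have j: "j \<in># M - {#j#}" by (simp only: in_diff_count)
  have jM: "j \<in># M" using c not_in_iff[of j M] by fastforce
  have "set_mset (M - {#j#}) = set_mset M"
  proof
    show "set_mset (M - {#j#}) \<subseteq> set_mset M" by (auto dest: in_diffD)
    show "set_mset M \<subseteq> set_mset (M - {#j#})"
    proof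
      fix x assume "x \<in># M"
      show "x \<in># M - {#j#}"
      proof (cases "x = j")
        case True then show ?thesis using j by simp
      next
        case False then show ?thesis using \<open>x \<in># M\<close> by (simp add: in_diff_count not_in_iff)
      qed
    qed
  qed
  moreover have "size M = Suc (size (M - {#j#}))" by (metis insert_DiffM size_add_mset jM)
  ultimately show ?thesis using card_set_mset_le[of "M - {#j#}"] by simp
qed

lemma linstep:
  fixes q :: "'k::field_char_0 nalg"
  assumes TI: "T_ideal TV" and q: "q \<in> TV" "q \<notin> T_B"
    and keys: "\<forall>t\<in>Poly_Mapping.keys q. LV t = M"
    and cj: "count M j \<ge> 2" and N: "N \<notin># M"
  shows "\<exists>q1. q1 \<in> TV \<and> q1 \<notin> T_B \<and> (\<forall>t\<in>Poly_Mapping.keys q1. LV t = M - {#j#} + {#N#})"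
proof -
  interpret Tid TV by unfold_locales (rule TI)
  have jM: "j \<in># M" using cj not_in_iff[of j M] by fastforce
  then have jN: "j \<noteq> N" using N by auto
  define q1 where "q1 = part N (Suc 0) (subst_na (tau j N) q)"
  have q1_eq: "q1 = (\<Sum>t\<in>Poly_Mapping.keys q. smult_na (Poly_Mapping.lookup q t) (DD j N t))"
  proof -
    have "q1 = (\<Sum>t\<in>Poly_Mapping.keys q. smult_na (Poly_Mapping.lookup q t) (part N (Suc 0) (subst_mon (tau j N) t)))"
      by (simp add: q1_def subst_na_def part_sum_lin part_smult)
    also have "\<dots> = (\<Sum>t\<in>Poly_Mapping.keys q. smult_na (Poly_Mapping.lookup q t) (DD j N t))"
    proof (intro sum.cong HOL.refl)
      fix t assume "t \<in> Poly_Mapping.keys q"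
      then have Nt: "N \<notin># LV t" using keys N by simp
      show "smult_na (Poly_Mapping.lookup q t) (part N (Suc 0) (subst_mon (tau j N) t)) =
        smult_na (Poly_Mapping.lookup q t) (DD j N t)"
      proof -
        have X: "part N (Suc 0) (subst_mon (tau j N) t) = (DD j N t :: 'k nalg)"
          using part_tau[OF Nt jN] by blast
        show ?thesis by (simp only: X)
      qed
    qed
    finally show ?thesis .
  qed
  have "q1 \<in> TV" unfolding q1_def by (intro part_in TI subst q(1))
  moreover have "q1 \<notin> T_B"
  proof
    assume "q1 \<in> T_B"
    then have "subst_na (rho N j) q1 \<in> T_B" by (rule TB.subst)
    moreover have "subst_na (rho N j) q1 = smult_na (of_nat (count M j)) q"
    proof -
      have "subst_na (rho N j) q1 = (\<Sum>t\<in>Poly_Mapping.keys q. smult_na (Poly_Mapping.lookup q t)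
             (smult_na (of_nat (cnt j t)) (mon t)))"
        unfolding q1_eq subst_na_sum subst_na_smult
      proof (intro sum.cong HOL.refl)
        fix t assume "t \<in> Poly_Mapping.keys q"
        then have "N \<notin># LV t" using keys N by simp
        then show "smult_na (Poly_Mapping.lookup q t) (subst_na (rho N j) (DD j N t)) =
          smult_na (Poly_Mapping.lookup q t) (smult_na (of_nat (cnt j t)) (mon t))"
        proof -
          have X: "subst_na (rho N j) (DD j N t) = smult_na (of_nat (cnt j t)) (mon t :: 'k nalg)"
            using subst_rho_DD[OF \<open>N \<notin># LV t\<close>] by blast
          show ?thesis by (simp only: X)
        qed
      qed
      also have "\<dots> = smult_na (of_nat (count M j)) (\<Sum>t\<in>Poly_Mapping.keys q. smult_na (Poly_Mapping.lookup q t) (mon t))"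
        unfolding smult_na_sum by (intro sum.cong HOL.refl) (use keys in \<open>auto simp: cnt_def mult.commute\<close>)
      finally show ?thesis by (simp add: expansion[symmetric])
    qed
    ultimately have "smult_na (of_nat (count M j)) q \<in> T_B" by simp
    then have "q \<in> T_B" using TB.smult_iff[of "of_nat (count M j)" q] cj by simp
    then show False using q(2) by simp
  qed
  moreover have "\<forall>t\<in>Poly_Mapping.keys q1. LV t = M - {#j#} + {#N#}"
  proof
    fix u assume u: "u \<in> Poly_Mapping.keys q1"
    have "u \<in> (\<Union>t\<in>Poly_Mapping.keys q. Poly_Mapping.keys (smult_na (Poly_Mapping.lookup q t) (DD j N t :: 'k nalg)))"
      using u unfolding q1_eq by (rule subsetD[OF keys_sum])
    then obtain t where t: "t \<in> Poly_Mapping.keys q"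
      "u \<in> Poly_Mapping.keys (smult_na (Poly_Mapping.lookup q t) (DD j N t :: 'k nalg))"
      by (rule UN_E)
    then have "u \<in> Poly_Mapping.keys (DD j N t :: 'k nalg)" by (simp add: in_keys_iff)
    from keys_DD[OF this] show "LV u = M - {#j#} + {#N#}" using keys t by simp
  qed
  ultimately show ?thesis by blast
qed

lemma linearize:
  fixes q :: "'k::field_char_0 nalg"
  assumes TI: "T_ideal TV"
  shows "q \<in> TV \<Longrightarrow> q \<notin> T_B \<Longrightarrow> \<forall>t\<in>Poly_Mapping.keys q. LV t = M \<Longrightarrow>
     \<exists>G V. G \<in> TV \<and> G \<notin> T_B \<and> finite V \<and> card V = size M \<and> (\<forall>t\<in>Poly_Mapping.keys G. LV t = mset_set V)"
proof (induction "size M - card (set_mset M)" arbitrary: q M rule: less_induct)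
  case less
  show ?case
  proof (cases "\<exists>j. count M j \<ge> 2")
    case True
    then obtain j where cj: "count M j \<ge> 2" by blast
    define N where "N = Suc (Max (insert 0 (set_mset M)))"
    have N: "N \<notin># M"
    proof
      assume "N \<in># M"
      then have "N \<le> Max (insert 0 (set_mset M))" by simp
      then show False by (simp add: N_def)
    qed
    obtain q1 where q1: "q1 \<in> TV" "q1 \<notin> T_B" "\<forall>t\<in>Poly_Mapping.keys q1. LV t = M - {#j#} + {#N#}"
      using linstep[OF TI less.prems cj N] by blast
    have jM: "j \<in># M" using cj not_in_iff[of j M] by fastforce
    have "count {#j#} j < count M j" using cj by simp
    then have jM': "j \<in># M - {#j#}" by (simp only: in_diff_count)
    have "size M = Suc (size (M - {#j#}))" by (metis insert_DiffM size_add_mset jM)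
    then have sz: "size (M - {#j#} + {#N#}) = size M" by simp
    have st: "set_mset (M - {#j#} + {#N#}) = insert N (set_mset M)"
    proof -
      have "set_mset (M - {#j#}) = set_mset M"
      proof
        show "set_mset (M - {#j#}) \<subseteq> set_mset M" by (auto dest: in_diffD)
        show "set_mset M \<subseteq> set_mset (M - {#j#})"
        proof
          fix x assume "x \<in># M"
          show "x \<in># M - {#j#}"
          proof (cases "x = j")
            case True then show ?thesis using jM' by simp
          next
            case False then show ?thesis using \<open>x \<in># M\<close> by (simp add: in_diff_count not_in_iff)
          qed
        qed
      qed
      then show ?thesis by simp
    qed
    have "card (set_mset (M - {#j#} + {#N#})) = Suc (card (set_mset M))"
      using st N by simp
    moreover have "card (set_mset M) < size M" by (rule card_lt_size[OF cj])
    ultimately have "size (M - {#j#} + {#N#}) - card (set_mset (M - {#j#} + {#N#})) < size M - card (set_mset M)"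
      using sz by simp
    from less.hyps[OF this q1] show ?thesis using sz by simp
  next
    case False
    then have "count M x \<le> 1" for x
    proof -
      have "count M x < 2" using False by (simp add: not_le)
      then show ?thesis by simp
    qed
    then have "M = mset_set (set_mset M)"
      by (intro multiset_eqI) (auto simp: count_mset_set' count_eq_zero_iff le_Suc_eq)
    then show ?thesis using less.prems
      by (intro exI[of _ q] exI[of _ "set_mset M"]) (auto, metis size_mset_set)
  qed
qed


definition cls :: "nmon \<Rightarrow> nat set" where "cls t = set_mset (Lm t)"

lemma sub_mset_set:
  assumes "X \<subseteq># mset_set V" "finite V"
  shows "X = mset_set (set_mset X) \<and> set_mset X \<subseteq> V"
proof
  have c: "count X x \<le> count (mset_set V) x" for x using assms(1) by (simp add: subseteq_mset_def)
  show "X = mset_set (set_mset X)"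
  proof (rule multiset_eqI)
    fix x
    have le: "count X x \<le> 1" using c[of x] assms(2) by (simp add: count_mset_set' split: if_splits)
    show "count X x = count (mset_set (set_mset X)) x"
    proof (cases "x \<in># X")
      case True
      then have "1 \<le> count X x" by (simp add: Suc_le_eq)
      moreover have "count (mset_set (set_mset X)) x = 1" using True by simp
      ultimately show ?thesis using le by linarith
    next
      case False
      then show ?thesis by (simp add: not_in_iff)
    qed
  qed
  show "set_mset X \<subseteq> V" using assms by (metis finite_set_mset_mset_set mset_subset_eqD subsetI)
qed

lemma Lm_multilin:
  assumes "LV t = mset_set V" "finite V"
  shows "Lm t = mset_set (cls t) \<and> cls t \<subseteq> V"
  using sub_mset_set[OF _ assms(2), of "Lm t"] Lm_sub[of t] assms(1) by (simp add: cls_def)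

lemma class_cong_ml:
  assumes "LV t = mset_set V" "LV u = mset_set V" "finite V" "cls t = cls u"
  shows "t \<approx> u"
  using Lm_multilin[OF assms(1,3)] Lm_multilin[OF assms(2,3)] assms by (intro class_cong) auto

locale ident =
  fixes TV :: "'k::field_char_0 nalg set" and G :: "'k nalg" and V :: "nat set"
  assumes TI: "T_ideal TV" and TBV: "T_B \<subseteq> TV" and GV: "G \<in> TV" and GB: "G \<notin> T_B"
    and finV: "finite V" and keysV: "\<forall>t\<in>Poly_Mapping.keys G. LV t = mset_set V"
begin

interpretation TVI: Tid TV by unfold_locales (rule TI)

definition beta :: "nat set \<Rightarrow> nat set \<Rightarrow> 'k" where
  "beta S T = (\<Sum>t\<in>{t\<in>Poly_Mapping.keys G. cls t \<inter> S = T}. Poly_Mapping.lookup G t)"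

lemma beta_split:
  assumes "i \<in> S" "T \<subseteq> S - {i}"
  shows "beta (S - {i}) T = beta S T + beta S (insert i T)"
proof -
  have eq: "{t\<in>Poly_Mapping.keys G. cls t \<inter> (S - {i}) = T} =
        {t\<in>Poly_Mapping.keys G. cls t \<inter> S = T} \<union> {t\<in>Poly_Mapping.keys G. cls t \<inter> S = insert i T}"
    using assms by blast
  have "beta (S - {i}) T = (\<Sum>t\<in>{t\<in>Poly_Mapping.keys G. cls t \<inter> S = T} \<union> {t\<in>Poly_Mapping.keys G. cls t \<inter> S = insert i T}. Poly_Mapping.lookup G t)"
    unfolding beta_def eq ..
  also have "\<dots> = beta S T + beta S (insert i T)"
    unfolding beta_def using assms by (intro sum.union_disjoint) auto
  finally show ?thesis .
qed

lemma beta_notsub: "\<not> T \<subseteq> S \<Longrightarrow> beta S T = 0"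
  unfolding beta_def by (rule sum.neutral) auto

lemma beta_V_nonzero: "\<exists>T. beta V T \<noteq> 0"
proof (rule ccontr)
  assume "\<not> ?thesis"
  then have z: "beta V T = 0" for T by simp
  define K where "K = Poly_Mapping.keys G"
  have fK: "finite K" by (simp add: K_def)
  define r where "r X = (SOME t. t \<in> K \<and> cls t = X)" for X
  have r: "r (cls t) \<in> K \<and> cls (r (cls t)) = cls t" if "t \<in> K" for t
    unfolding r_def by (rule someI_ex) (use that in blast)
  have cong: "(mon t - mon (r (cls t)) :: 'k nalg) \<in> T_B" if "t \<in> K" for t
    by (rule bcr_sound, rule class_cong_ml[OF _ _ finV]) (use r[OF that] keysV that in \<open>auto simp: K_def\<close>)
  have G: "G = (\<Sum>t\<in>K. smult_na (Poly_Mapping.lookup G t) (mon t))"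
    unfolding K_def by (rule expansion)
  have "(\<Sum>t\<in>K. smult_na (Poly_Mapping.lookup G t) (mon (r (cls t)))) =
        (\<Sum>X\<in>cls ` K. \<Sum>t\<in>{t. t \<in> K \<and> cls t = X}. smult_na (Poly_Mapping.lookup G t) (mon (r (cls t))))"
    by (rule sum.group[symmetric]) (use fK in auto)
  also have "\<dots> = (\<Sum>X\<in>cls ` K. smult_na (beta V X) (mon (r X)))"
  proof (intro sum.cong HOL.refl)
    fix X assume "X \<in> cls ` K"
    have sub: "cls t \<subseteq> V" if "t \<in> K" for t using Lm_multilin[OF _ finV] keysV that by (auto simp: K_def)
    have "{t. t \<in> K \<and> cls t = X} = {t\<in>Poly_Mapping.keys G. cls t \<inter> V = X}"
      using sub by (auto simp: K_def Int_absorb2)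
    moreover have "(\<Sum>t\<in>{t. t \<in> K \<and> cls t = X}. smult_na (Poly_Mapping.lookup G t) (mon (r (cls t)))) =
        (\<Sum>t\<in>{t. t \<in> K \<and> cls t = X}. smult_na (Poly_Mapping.lookup G t) (mon (r X)))"
      by (intro sum.cong) auto
    ultimately show "(\<Sum>t\<in>{t. t \<in> K \<and> cls t = X}. smult_na (Poly_Mapping.lookup G t) (mon (r (cls t)))) =
        smult_na (beta V X) (mon (r X))"
      by (simp add: beta_def smult_na_sum_left)
  qed
  also have "\<dots> = 0" by (simp add: z)
  finally have "G = (\<Sum>t\<in>K. smult_na (Poly_Mapping.lookup G t) (mon t - mon (r (cls t))))"
    using G by (simp add: smult_na_diff sum_subtractf)
  also have "\<dots> \<in> T_B" by (intro TB.sum TB.smult cong)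
  finally show False using GB by simp
qed

lemma V_ne: "V \<noteq> {}"
proof
  assume "V = {}"
  have "Poly_Mapping.keys G = {}"
  proof (rule ccontr)
    assume "Poly_Mapping.keys G \<noteq> {}"
    then obtain t where "t \<in> Poly_Mapping.keys G" by blast
    then have "mset (leaves t) = {#}" using keysV \<open>V = {}\<close> by simp
    then have "leaves t = []" by simp
    with leaves_ne[of t] show False by simp
  qed
  then have "G = 0" by simp
  moreover have "(0::'k nalg) \<in> T_B" by (rule TB.zero)
  ultimately show False using GB by simp
qed

lemma beta_VV: "beta V V = 0"
proof -
  have E: "{t\<in>Poly_Mapping.keys G. cls t \<inter> V = V} = {}"
  proof (rule ccontr)
    assume "\<not> ?thesis"
    then obtain t where t: "t \<in> Poly_Mapping.keys G" "V \<subseteq> cls t" by blast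
    have LVt: "LV t = mset_set V" using keysV t by simp
    from Lm_multilin[OF LVt finV] have "Lm t = mset_set V" using t by auto
    then have "LV t - Lm t = {#}" using LVt by simp
    show False
    proof (cases "isMul t")
      case True then show False using R_ne \<open>LV t - Lm t = {#}\<close> by blast
    next
      case False
      then obtain i where "t = Var i" by (cases t) auto
      then have "Lm t = {#}" by simp
      then show False using \<open>Lm t = mset_set V\<close> V_ne finV by (simp add: mset_set_empty_iff)
    qed
  qed
  show ?thesis unfolding beta_def E by simp
qed

lemma beta_key: "\<exists>S. S \<subset> V \<and> beta S S \<noteq> 0"
proof -
  define P where "P S \<longleftrightarrow> S \<subseteq> V \<and> (\<exists>T. beta S T \<noteq> 0)" for S
  have "P V" unfolding P_def using beta_V_nonzero by auto
  from ex_has_least_nat[of P V card, OF \<open>P V\<close>] obtain S where S: "P S" and min: "\<forall>S'. P S' \<longrightarrow> card S \<le> card S'"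
    by blast
  have SV: "S \<subseteq> V" using S by (simp add: P_def)
  have finS: "finite S" using SV finV finite_subset by blast
  have zero: "beta (S - {i}) T = 0" if "i \<in> S" for i T
  proof (rule ccontr)
    assume "beta (S - {i}) T \<noteq> 0"
    then have "P (S - {i})" using SV by (auto simp: P_def)
    then have "card S \<le> card (S - {i})" using min by blast
    moreover have "card (S - {i}) < card S" by (rule card_Diff1_less[OF finS that])
    ultimately show False by simp
  qed
  have prp: "beta S (insert i T) \<noteq> 0" if "beta S T \<noteq> 0" "T \<subseteq> S" "i \<in> S - T" for i T
  proof -
    have "T \<subseteq> S - {i}" using that by auto
    from beta_split[OF _ this] zero[of i T] that show ?thesis by auto
  qed
  have grow: "\<forall>T. T \<subseteq> S \<and> card (S - T) = n \<and> beta S T \<noteq> 0 \<longrightarrow> beta S S \<noteq> 0" for n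
  proof (induction n)
    case 0
    show ?case
    proof (intro allI impI)
      fix T assume T: "T \<subseteq> S \<and> card (S - T) = 0 \<and> beta S T \<noteq> 0"
      then have "S - T = {}" using finS by simp
      then have "T = S" using T by blast
      then show "beta S S \<noteq> 0" using T by simp
    qed
  next
    case (Suc n)
    show ?case
    proof (intro allI impI)
      fix T assume T: "T \<subseteq> S \<and> card (S - T) = Suc n \<and> beta S T \<noteq> 0"
      then obtain i where i: "i \<in> S - T" by (metis card.empty ex_in_conv nat.distinct(1))
      have "card (S - insert i T) = n" using T i finS
        by (metis Diff_insert card_Diff_singleton diff_Suc_1 finite_Diff)
      moreover have "insert i T \<subseteq> S" using T i by auto
      moreover have "beta S (insert i T) \<noteq> 0" using prp T i by blast
      ultimately show "beta S S \<noteq> 0" using Suc.IH by blast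
    qed
  qed
  obtain T0 where T0: "beta S T0 \<noteq> 0" using S by (auto simp: P_def)
  then have "T0 \<subseteq> S" using beta_notsub by blast
  then have "beta S S \<noteq> 0" using grow T0 by blast
  moreover have "S \<noteq> V" using beta_VV calculation by auto
  ultimately show ?thesis using SV by blast
qed

end


lemma set_mset_sum_image: "set_mset (sum_mset (image_mset g M)) = (\<Union>i\<in>set_mset M. set_mset (g i))"
  by (induction M) auto

lemma LV_tsub: "LV (tsub \<sigma> t) = sum_mset (image_mset (\<lambda>i. LV (\<sigma> i)) (LV t))"
  by (induction t) auto

lemma Lm_tsub:
  "Lm (tsub \<sigma> t) = sum_mset (image_mset (\<lambda>i. lam (\<sigma> i)) (Lm t)) + sum_mset (image_mset (\<lambda>i. Lm (\<sigma> i)) (LV t - Lm t))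
   \<and> lam (tsub \<sigma> t) = sum_mset (image_mset (\<lambda>i. lam (\<sigma> i)) (lam t)) + sum_mset (image_mset (\<lambda>i. Lm (\<sigma> i)) (LV t - lam t))"
proof (induction t)
  case (Var i)
  then show ?case by (simp add: lam_def)
next
  case (Mul a b)
  have e: "LV (Mul a b) - (lam a + Lm b) = (LV a - lam a) + (LV b - Lm b)"
    using mdiff_pp[OF lam_sub Lm_sub, of a b] by (simp add: Lm_Mul)
  have "Lm (tsub \<sigma> (Mul a b)) = lam (tsub \<sigma> a) + Lm (tsub \<sigma> b)" by (simp add: Lm_Mul)
  also have "\<dots> = (sum_mset (image_mset (\<lambda>i. lam (\<sigma> i)) (lam a)) + sum_mset (image_mset (\<lambda>i. Lm (\<sigma> i)) (LV a - lam a)))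
      + (sum_mset (image_mset (\<lambda>i. lam (\<sigma> i)) (Lm b)) + sum_mset (image_mset (\<lambda>i. Lm (\<sigma> i)) (LV b - Lm b)))"
    using Mul.IH by simp
  also have "\<dots> = sum_mset (image_mset (\<lambda>i. lam (\<sigma> i)) (lam a + Lm b)) + sum_mset (image_mset (\<lambda>i. Lm (\<sigma> i)) ((LV a - lam a) + (LV b - Lm b)))"
    by (simp only: image_mset_union sum_mset.union ac_simps)
  also have "\<dots> = sum_mset (image_mset (\<lambda>i. lam (\<sigma> i)) (Lm (Mul a b))) + sum_mset (image_mset (\<lambda>i. Lm (\<sigma> i)) (LV (Mul a b) - Lm (Mul a b)))"
    by (simp only: e Lm_Mul)
  finally have 1: "Lm (tsub \<sigma> (Mul a b)) = \<dots>" .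
  then show ?case by simp
qed

lemma mset_sorted: "finite A \<Longrightarrow> mset (sorted_list_of_set A) = mset_set A"
  by (metis mset_set_set distinct_sorted_list_of_set set_sorted_list_of_set)

lemma sum_single_mset: "finite A \<Longrightarrow> (\<Sum>i\<in>A. {#g i#}) = image_mset g (mset_set A)"
  by (induction A rule: finite_induct) auto

definition sig :: "nat set \<Rightarrow> (nat \<Rightarrow> nat) \<Rightarrow> (nat \<Rightarrow> nat) \<Rightarrow> nat \<Rightarrow> nmon" where
  "sig S e f = (\<lambda>i. if i \<in> S then Var (e i) else Mul (Var (e i)) (Var (f i)))"

lemma sig_props:
  assumes finV: "finite V" and LVt: "LV t = mset_set V" and SV: "S \<subseteq> V"
    and ie: "inj_on e V" and jf: "inj_on f (V - S)"
  shows "LV (tsub (sig S e f) t) = mset_set (e ` V) + mset_set (f ` (V - S))"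
    and "cls (tsub (sig S e f) t) = e ` ((cls t \<inter> S) \<union> (V - S))"
proof -
  let ?s = "sig S e f"
  have LVs: "LV (?s i) = {#e i#} + (if i \<in> S then {#} else {#f i#})" for i by (simp add: sig_def)
  have "LV (tsub ?s t) = (\<Sum>i\<in>V. LV (?s i))"
    by (simp add: LV_tsub LVt sum_unfold_sum_mset)
  also have "\<dots> = (\<Sum>i\<in>V. {#e i#}) + (\<Sum>i\<in>V. if i \<in> S then {#} else {#f i#})"
    by (simp add: LVs sum.distrib[symmetric])
  also have "(\<Sum>i\<in>V. if i \<in> S then {#} else {#f i#}) = (\<Sum>i\<in>V - S. {#f i#})"
    by (simp add: sum.If_cases finV Diff_eq)
  finally show "LV (tsub ?s t) = mset_set (e ` V) + mset_set (f ` (V - S))"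
    using finV ie jf by (simp add: sum_single_mset image_mset_mset_set)
  have Lmt: "Lm t = mset_set (cls t)" and cV: "cls t \<subseteq> V" using Lm_multilin[OF LVt finV] by auto
  have R: "LV t - Lm t = mset_set (V - cls t)" using LVt Lmt cV finV by (simp add: mset_set_Diff)
  have lams: "lam (?s i) = {#e i#}" for i by (simp add: sig_def Lm_Mul)
  have Lms: "set_mset (Lm (?s i)) = (if i \<in> S then {} else {e i})" for i by (cases "i \<in> S") (simp_all add: sig_def Lm_Mul)
  have "cls (tsub ?s t) = (\<Union>i\<in>cls t. {e i}) \<union> (\<Union>i\<in>V - cls t. if i \<in> S then {} else {e i})"
    unfolding cls_def using conjunct1[OF Lm_tsub[of ?s t]] Lmt R cV finV
    by (simp add: set_mset_sum_image lams Lms finite_subset) blast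
  also have "\<dots> = e ` (cls t \<union> ((V - cls t) - S))" by auto
  also have "cls t \<union> ((V - cls t) - S) = (cls t \<inter> S) \<union> (V - S)" using cV by blast
  finally show "cls (tsub ?s t) = e ` ((cls t \<inter> S) \<union> (V - S))" .
qed

lemma sig_isMul:
  assumes "LV t = mset_set V" "finite V" "S \<subset> V"
  shows "isMul (tsub (sig S e f) t)"
proof (cases t)
  case (Var i)
  then have "set_mset (LV t) = V" using assms by simp
  then have "V = {i}" using Var by simp
  then have "S = {}" using assms by auto
  then show ?thesis using Var by (simp add: sig_def)
qed simp

lemma isMul_tsub: "isMul t \<Longrightarrow> isMul (tsub \<sigma> t)"
  by (cases t) auto

definition mlx :: "nat list \<Rightarrow> 'k::field nalg \<Rightarrow> 'k nalg" where
  "mlx xs p = foldr (\<lambda>x q. mul_na (mon (Var x)) q) xs p"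
definition mry :: "nat list \<Rightarrow> 'k::field nalg \<Rightarrow> 'k nalg" where
  "mry ys p = foldl (\<lambda>q y. mul_na q (mon (Var y))) p ys"

lemma mlx_sum: "mlx xs (\<Sum>t\<in>K. smult_na (c t) (mon (w t))) = (\<Sum>t\<in>K. smult_na (c t) (mon (cl xs (w t))))"
  by (induction xs) (simp_all add: mlx_def mul_na_sum_right mul_na_smult_right mul_na_mon)

lemma mry_sum: "mry ys (\<Sum>t\<in>K. smult_na (c t) (mon (w t))) = (\<Sum>t\<in>K. smult_na (c t) (mon (cr (w t) ys)))"
proof (induction ys arbitrary: w)
  case Nil then show ?case by (simp add: mry_def)
next
  case (Cons y ys)
  have "mry (y # ys) (\<Sum>t\<in>K. smult_na (c t) (mon (w t))) =
      mry ys (\<Sum>t\<in>K. smult_na (c t) (mon (Mul (w t) (Var y))))"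
    by (simp add: mry_def mul_na_sum_left mul_na_smult_left mul_na_mon)
  also have "\<dots> = (\<Sum>t\<in>K. smult_na (c t) (mon (cr (Mul (w t) (Var y)) ys)))" by (rule Cons)
  finally show ?case by simp
qed

lemma mlx_in: "T_ideal I \<Longrightarrow> p \<in> I \<Longrightarrow> mlx xs p \<in> I"
  by (induction xs) (auto simp: mlx_def T_ideal_def)

lemma mry_in: "T_ideal I \<Longrightarrow> p \<in> I \<Longrightarrow> mry ys p \<in> I"
  unfolding mry_def by (induction ys arbitrary: p) (auto simp: T_ideal_def)


context ident begin

interpretation TVI: Tid TV by unfold_locales (rule TI)

lemma reduce:
  assumes SV: "S \<subset> V" and bS: "beta S S \<noteq> 0" and Vk: "card V \<le> k"
    and u: "LV u = mset_set {1..n}" and ku: "k \<le> card (cls u)" and kr: "k \<le> n - card (cls u)"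
  shows "\<exists>v \<in> nvs.span (mon ` {w. LV w = mset_set {1..n} \<and> card (cls w) < card (cls u)}). mon u - v \<in> TV"
proof -
  define Lu where "Lu = cls u"
  define Ru where "Ru = {1..n} - Lu"
  have Lu1: "Lu \<subseteq> {1..n}" using Lm_multilin[OF u] by (simp add: Lu_def)
  have fLu: "finite Lu" and fRu: "finite Ru" using Lu1 finite_subset by (auto simp: Ru_def)
  have cRu: "card Ru = n - card Lu" using Lu1 by (simp add: Ru_def card_Diff_subset finite_subset)
  have S_sub: "S \<subseteq> V" using SV by auto
  obtain e where ie: "inj_on e V" and eV: "e ` V \<subseteq> Lu"
    using card_le_inj[OF finV fLu] Vk ku by (auto simp: Lu_def)
  have "card (V - S) \<le> card Ru" using card_Diff_subset[OF finite_subset[OF S_sub finV] S_sub] Vk kr cRu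
    by (simp add: Lu_def)
  then obtain f where jf: "inj_on f (V - S)" and fV: "f ` (V - S) \<subseteq> Ru"
    using card_le_inj[OF _ fRu] finV by blast
  define A' where "A' = Lu - e ` V"
  define B' where "B' = Ru - f ` (V - S)"
  define xs where "xs = sorted_list_of_set A'"
  define ys where "ys = sorted_list_of_set B'"
  define \<sigma> where "\<sigma> = sig S e f"
  define W where "W t = cr (cl xs (tsub \<sigma> t)) ys" for t
  define K where "K = Poly_Mapping.keys G"
  define c where "c t = Poly_Mapping.lookup G t" for t
  have fA': "finite A'" and fB': "finite B'" using fLu fRu by (auto simp: A'_def B'_def)
  have mxs: "mset xs = mset_set A'" and mys: "mset ys = mset_set B'"
    using fA' fB' by (simp_all add: xs_def ys_def mset_sorted)
  have "subst_na (\<lambda>i. mon (\<sigma> i)) G = (\<Sum>t\<in>K. smult_na (c t) (mon (tsub \<sigma> t)))"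
    by (simp add: subst_na_def subst_mon_tsub K_def c_def)
  then have Peq: "mry ys (mlx xs (subst_na (\<lambda>i. mon (\<sigma> i)) G)) = (\<Sum>t\<in>K. smult_na (c t) (mon (W t)))"
    by (simp add: mlx_sum mry_sum W_def)
  have PV: "(\<Sum>t\<in>K. smult_na (c t) (mon (W t))) \<in> TV"
    unfolding Peq[symmetric] by (intro mry_in mlx_in TI TVI.subst GV)
  have tprops: "LV (W t) = mset_set {1..n} \<and> cls (W t) = A' \<union> e ` ((cls t \<inter> S) \<union> (V - S))" if t: "t \<in> K" for t
  proof -
    have LVt: "LV t = mset_set V" using keysV t by (simp add: K_def)
    have im: "isMul (tsub \<sigma> t)" unfolding \<sigma>_def by (rule sig_isMul[OF LVt finV SV])
    have LVs: "LV (tsub \<sigma> t) = mset_set (e ` V) + mset_set (f ` (V - S))"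
      unfolding \<sigma>_def by (rule sig_props(1)[OF finV LVt S_sub ie jf])
    have clss: "cls (tsub \<sigma> t) = e ` ((cls t \<inter> S) \<union> (V - S))"
      unfolding \<sigma>_def by (rule sig_props(2)[OF finV LVt S_sub ie jf])
    have "LV (W t) = mset_set A' + mset_set (e ` V) + (mset_set (f ` (V - S)) + mset_set B')"
      by (simp add: W_def LV_cr LV_cl LVs mxs mys ac_simps)
    also have "mset_set A' + mset_set (e ` V) = mset_set Lu"
    proof -
      have "A' \<union> e ` V = Lu" using eV by (auto simp: A'_def)
      then show ?thesis using fA' finV by (subst mset_set_Union[symmetric]) (auto simp: A'_def)
    qed
    also have "mset_set (f ` (V - S)) + mset_set B' = mset_set Ru"
    proof -
      have "f ` (V - S) \<union> B' = Ru" using fV by (auto simp: B'_def)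
      then show ?thesis using fB' finV by (subst mset_set_Union[symmetric]) (auto simp: B'_def)
    qed
    also have "mset_set Lu + mset_set Ru = mset_set {1..n}"
    proof -
      have "Lu \<union> Ru = {1..n}" using Lu1 by (auto simp: Ru_def)
      then show ?thesis using fLu fRu by (subst mset_set_Union[symmetric]) (auto simp: Ru_def)
    qed
    finally have 1: "LV (W t) = mset_set {1..n}" .
    have "Lm (W t) = mset xs + Lm (tsub \<sigma> t)"
      by (simp add: W_def Lm_cr isMul_cl im Lm_cl)
    then have "cls (W t) = A' \<union> cls (tsub \<sigma> t)"
      using fA' by (simp add: cls_def mxs)
    then show ?thesis using 1 clss by simp
  qed
  define K1 where "K1 = {t\<in>K. cls t \<inter> S = S}"
  define K2 where "K2 = K - K1"
  have fK: "finite K" by (simp add: K_def)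
  have K1sub: "K1 \<subseteq> K" by (auto simp: K1_def)
  have bSS: "beta S S = (\<Sum>t\<in>K1. c t)" by (simp add: beta_def K1_def K_def c_def)
  have K1cong: "mon (W t) - mon u \<in> TV" if "t \<in> K1" for t
  proof -
    have t: "t \<in> K" "cls t \<inter> S = S" using that by (auto simp: K1_def)
    have "cls (W t) = A' \<union> e ` V" using tprops[OF t(1)] t(2) S_sub by (simp add: Un_absorb1 Un_absorb2)
    also have "\<dots> = cls u" using eV by (auto simp: A'_def Lu_def)
    finally have "W t \<approx> u" using tprops[OF t(1)] u by (intro class_cong_ml[of _ "{1..n}"]) auto
    then show ?thesis using bcr_sound TBV by blast
  qed
  have K2small: "LV (W t) = mset_set {1..n} \<and> card (cls (W t)) < card (cls u)" if "t \<in> K2" for t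
  proof -
    have t: "t \<in> K" "cls t \<inter> S \<noteq> S" using that by (auto simp: K1_def K2_def)
    define T where "T = cls t \<inter> S"
    have TS: "T \<subset> S" using t(2) by (auto simp: T_def)
    have finS: "finite S" using S_sub finV finite_subset by blast
    have cT: "card T < card S" using TS finS by (simp add: psubset_card_mono)
    have TVS: "T \<union> (V - S) \<subseteq> V" using TS S_sub by auto
    have "card (cls (W t)) = card (A' \<union> e ` (T \<union> (V - S)))" using tprops[OF t(1)] by (simp add: T_def)
    also have "\<dots> = card A' + card (e ` (T \<union> (V - S)))"
      using fA' finV TVS by (intro card_Un_disjoint) (auto simp: A'_def intro: finite_subset)
    also have "card (e ` (T \<union> (V - S))) = card (T \<union> (V - S))"
      using inj_on_subset[OF ie TVS] by (simp add: card_image)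
    also have "\<dots> = card T + card (V - S)"
      using finS finV TS finite_subset[of T S] by (intro card_Un_disjoint) auto
    also have "card A' + (card T + card (V - S)) < card A' + (card S + card (V - S))" using cT by simp
    also have "card S + card (V - S) = card V"
      using finS finV S_sub by (metis card_Diff_subset card_mono le_add_diff_inverse)
    also have "card V = card (e ` V)" using ie by (simp add: card_image)
    also have "card A' + card (e ` V) = card Lu"
    proof -
      have "A' \<union> e ` V = Lu" using eV by (auto simp: A'_def)
      moreover have "card (A' \<union> e ` V) = card A' + card (e ` V)"
        using fA' finV by (intro card_Un_disjoint) (auto simp: A'_def)
      ultimately show ?thesis by simp
    qed
    finally show ?thesis using tprops[OF t(1)] by (simp add: Lu_def)
  qed
  define \<beta> where "\<beta> = beta S S"
  define Q where "Q = (\<Sum>t\<in>K2. smult_na (c t) (mon (W t)))"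
  have split: "(\<Sum>t\<in>K. smult_na (c t) (mon (W t))) =
      (\<Sum>t\<in>K1. smult_na (c t) (mon (W t) - mon u)) + smult_na \<beta> (mon u) + Q"
  proof -
    have "(\<Sum>t\<in>K. smult_na (c t) (mon (W t))) = (\<Sum>t\<in>K1. smult_na (c t) (mon (W t))) + Q"
      unfolding Q_def K2_def using fK K1sub by (simp add: sum.subset_diff)
    moreover have "(\<Sum>t\<in>K1. smult_na (c t) (mon (W t))) =
        (\<Sum>t\<in>K1. smult_na (c t) (mon (W t) - mon u)) + smult_na \<beta> (mon u)"
      by (simp add: \<beta>_def bSS smult_na_diff sum_subtractf smult_na_sum_left)
    ultimately show ?thesis by simp
  qed
  have K1V: "(\<Sum>t\<in>K1. smult_na (c t) (mon (W t) - mon u)) \<in> TV"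
    by (intro TVI.sum TVI.smult K1cong)
  have "smult_na \<beta> (mon u) + Q \<in> TV"
  proof -
    have "smult_na \<beta> (mon u) + Q = (\<Sum>t\<in>K. smult_na (c t) (mon (W t))) - (\<Sum>t\<in>K1. smult_na (c t) (mon (W t) - mon u))"
      using split by (simp add: algebra_simps)
    also have "\<dots> \<in> TV" using PV K1V by (rule TVI.diff)
    finally show ?thesis .
  qed
  then have mem: "smult_na (inverse \<beta>) (smult_na \<beta> (mon u) + Q) \<in> TV" by (rule TVI.smult)
  define v where "v = smult_na (- inverse \<beta>) Q"
  have "v \<in> nvs.span (mon ` {w. LV w = mset_set {1..n} \<and> card (cls w) < card (cls u)})"
    unfolding v_def Q_def
    by (intro nvs.span_scale nvs.span_sum nvs.span_base) (use K2small in auto)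
  moreover have "mon u - v = smult_na (inverse \<beta>) (smult_na \<beta> (mon u) + Q)"
  proof (rule poly_mapping_eqI)
    fix x
    have b0: "\<beta> \<noteq> 0" using bS by (simp add: \<beta>_def)
    show "Poly_Mapping.lookup (mon u - v) x = Poly_Mapping.lookup (smult_na (inverse \<beta>) (smult_na \<beta> (mon u) + Q)) x"
      using b0 by (simp add: v_def lookup_minus lookup_add field_simps)
  qed
  ultimately show ?thesis using mem by (intro bexI[where x=v]) simp_all
qed

end


definition rep :: "nat \<Rightarrow> nat set \<Rightarrow> nmon" where
  "rep n X = (SOME w. LV w = mset_set {1..n} \<and> cls w = X)"

definition Ix :: "nat \<Rightarrow> nat \<Rightarrow> nat set set" where
  "Ix k n = {X. X \<subseteq> {1..n} \<and> (card X < k \<or> n - card X < k)}"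

definition Good :: "nat \<Rightarrow> nat \<Rightarrow> nmon set" where
  "Good k n = rep n ` Ix k n"

context ident begin

interpretation TVI: Tid TV by unfold_locales (rule TI)

lemma span_trans:
  assumes "p \<in> nvs.span (mon ` A)"
    and "\<And>w. w \<in> A \<Longrightarrow> \<exists>v \<in> nvs.span B. mon w - v \<in> TV"
  shows "\<exists>v \<in> nvs.span B. p - v \<in> TV"
  using assms(1)
proof (induction rule: nvs.span_induct_alt)
  case base
  show ?case by (intro bexI[of _ 0]) (simp_all add: TVI.zero nvs.span_zero)
next
  case (step c x y)
  then obtain w where w: "w \<in> A" "x = mon w" by blast
  obtain v1 where v1: "v1 \<in> nvs.span B" "mon w - v1 \<in> TV" using assms(2)[OF w(1)] by blast
  obtain v2 where v2: "v2 \<in> nvs.span B" "y - v2 \<in> TV" using step.IH by blast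
  have "smult_na c x + y - (smult_na c v1 + v2) = smult_na c (mon w - v1) + (y - v2)"
    using w(2) by (simp add: smult_na_diff algebra_simps)
  also have "\<dots> \<in> TV" using v1 v2 by (intro TVI.add TVI.smult)
  finally show ?case using v1 v2 by (intro bexI[of _ "smult_na c v1 + v2"]) (auto intro: nvs.span_add nvs.span_scale)
qed

lemma span_all:
  assumes Vk: "card V \<le> k"
  shows "LV u = mset_set {1..n} \<Longrightarrow> \<exists>v \<in> nvs.span (mon ` Good k n). mon u - v \<in> TV"
proof (induction "card (cls u)" arbitrary: u rule: less_induct)
  case less
  obtain S where S: "S \<subset> V" "beta S S \<noteq> 0" using beta_key by blast
  have cu: "cls u \<subseteq> {1..n}" using Lm_multilin[OF less.prems] by simp
  then have cun: "card (cls u) \<le> n" using card_mono[of "{1..n}" "cls u"] by simp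
  show ?case
  proof (cases "card (cls u) < k \<or> n - card (cls u) < k")
    case True
    then have X: "cls u \<in> Ix k n" using cu by (simp add: Ix_def)
    have ex: "\<exists>w. LV w = mset_set {1..n} \<and> cls w = cls u" using less.prems by blast
    have r: "LV (rep n (cls u)) = mset_set {1..n} \<and> cls (rep n (cls u)) = cls u"
      unfolding rep_def by (rule someI_ex[OF ex])
    have "u \<approx> rep n (cls u)" using r less.prems by (intro class_cong_ml[of _ "{1..n}"]) auto
    then have "mon u - mon (rep n (cls u)) \<in> TV" using bcr_sound TBV by blast
    moreover have "mon (rep n (cls u)) \<in> nvs.span (mon ` Good k n)"
      using X by (intro nvs.span_base) (auto simp: Good_def)
    ultimately show ?thesis by blast
  next
    case False
    then have ku: "k \<le> card (cls u)" "k \<le> n - card (cls u)" by auto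
    obtain v0 where v0: "v0 \<in> nvs.span (mon ` {w. LV w = mset_set {1..n} \<and> card (cls w) < card (cls u)})"
      "mon u - v0 \<in> TV"
      using reduce[OF S Vk less.prems ku] by blast
    have "\<exists>v \<in> nvs.span (mon ` Good k n). v0 - v \<in> TV"
    proof (rule span_trans[OF v0(1)])
      fix w assume "w \<in> {w. LV w = mset_set {1..n} \<and> card (cls w) < card (cls u)}"
      then show "\<exists>v \<in> nvs.span (mon ` Good k n). mon w - v \<in> TV" using less.hyps by blast
    qed
    then obtain v where v: "v \<in> nvs.span (mon ` Good k n)" "v0 - v \<in> TV" by blast
    have "mon u - v = (mon u - v0) + (v0 - v)" by simp
    also have "\<dots> \<in> TV" using v0(2) v(2) by (rule TVI.add)
    finally show ?thesis using v(1) by blast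
  qed
qed

lemma finite_Ix: "finite (Ix k n)"
  unfolding Ix_def by (rule finite_subset[of _ "Pow {1..n}"]) auto

lemma finite_Good: "finite (Good k n)"
  unfolding Good_def by (simp add: finite_Ix)

lemma indep_bound:
  assumes Vk: "card V \<le> k" and Sm: "S \<subseteq> multilin_mons n" and ind: "indep_mod TV S"
  shows "card S \<le> card (Good k n)"
proof (cases "finite S")
  case False then show ?thesis by simp
next
  case finS: True
  have mm: "mset [1..<n+1] = mset_set {1..n}"
    by (simp del: upt_Suc add: atLeastLessThanSuc_atLeastAtMost)
  have LVS: "LV t = mset_set {1..n}" if "t \<in> S" for t
    using Sm that mm by (auto simp: multilin_mons_def simp del: upt_Suc)
  have "\<exists>v. v \<in> nvs.span (mon ` Good k n) \<and> mon t - v \<in> TV" if "t \<in> S" for t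
    using span_all[OF Vk LVS[OF that]] by blast
  then obtain v where v: "\<And>t. t \<in> S \<Longrightarrow> v t \<in> nvs.span (mon ` Good k n) \<and> mon t - v t \<in> TV"
    by metis
  have triv: "\<forall>t\<in>S. d t = 0" if "(\<Sum>t\<in>S. smult_na (d t) (v t)) = 0" for d
  proof -
    have "(\<Sum>t\<in>S. smult_na (d t) (mon t)) = (\<Sum>t\<in>S. smult_na (d t) (mon t - v t)) + (\<Sum>t\<in>S. smult_na (d t) (v t))"
      by (simp add: smult_na_diff sum_subtractf)
    also have "\<dots> = (\<Sum>t\<in>S. smult_na (d t) (mon t - v t))" using that by simp
    also have "\<dots> \<in> TV" using v by (intro TVI.sum TVI.smult) auto
    finally show ?thesis using ind unfolding indep_mod_def by blast
  qed
  have inj: "inj_on v S"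
  proof (rule inj_onI)
    fix s t assume st: "s \<in> S" "t \<in> S" "v s = v t"
    show "s = t"
    proof (rule ccontr)
      assume ne: "s \<noteq> t"
      define d where "d x = (if x = s then 1 else if x = t then -1 else (0::'k))" for x
      have "(\<Sum>x\<in>S. smult_na (d x) (v x)) = (\<Sum>x\<in>{s, t}. smult_na (d x) (v x))"
        using st finS by (intro sum.mono_neutral_right) (auto simp: d_def)
      also have "\<dots> = 0" using ne st by (simp add: d_def smult_na_minus1)
      finally have "\<forall>x\<in>S. d x = 0" by (rule triv)
      then have "d s = 0" using st by blast
      then show False by (simp add: d_def)
    qed
  qed
  have indep: "nvs.independent (v ` S)"
  proof
    assume "nvs.dependent (v ` S)"
    then obtain T u where T: "finite T" "T \<subseteq> v ` S" "(\<Sum>x\<in>T. smult_na (u x) x) = 0" "\<exists>x\<in>T. u x \<noteq> 0"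
      unfolding nvs.dependent_explicit by blast
    define d where "d t = (if v t \<in> T then u (v t) else 0)" for t
    have "(\<Sum>t\<in>S. smult_na (d t) (v t)) = (\<Sum>t\<in>S. if v t \<in> T then smult_na (u (v t)) (v t) else 0)"
      by (intro sum.cong) (auto simp: d_def)
    also have "\<dots> = (\<Sum>t\<in>{t\<in>S. v t \<in> T}. smult_na (u (v t)) (v t))"
      using finS by (simp add: sum.inter_filter)
    also have "\<dots> = (\<Sum>x\<in>v ` {t\<in>S. v t \<in> T}. smult_na (u x) x)"
    proof -
      have sub: "{t\<in>S. v t \<in> T} \<subseteq> S" by auto
      show ?thesis by (simp add: sum.reindex[OF inj_on_subset[OF inj sub]])
    qed
    also have "v ` {t\<in>S. v t \<in> T} = T" using T(2) by blast
    finally have "\<forall>t\<in>S. d t = 0" using T(3) by (intro triv) simp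
    moreover obtain x where x: "x \<in> T" "u x \<noteq> 0" using T(4) by blast
    moreover obtain t where "t \<in> S" "x = v t" using T(2) x(1) by blast
    ultimately show False by (auto simp: d_def)
  qed
  have vsub: "v ` S \<subseteq> nvs.span (mon ` Good k n)"
  proof
    fix x assume "x \<in> v ` S"
    then obtain t where "t \<in> S" "x = v t" by blast
    then show "x \<in> nvs.span (mon ` Good k n)" using v by simp
  qed
  have "card (v ` S) \<le> card ((mon :: nmon \<Rightarrow> 'k nalg) ` Good k n)"
    using nvs.independent_span_bound[OF finite_imageI[OF finite_Good] indep vsub] by (rule conjunct2)
  moreover have "card (v ` S) = card S" using inj by (simp add: card_image)
  moreover have "card ((mon :: nmon \<Rightarrow> 'k nalg) ` Good k n) \<le> card (Good k n)" by (rule card_image_le[OF finite_Good])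
  ultimately show ?thesis by simp
qed

lemma codim_bound:
  assumes Vk: "card V \<le> k"
  shows "codim TV n \<le> card (Good k n)"
  unfolding codim_def
proof (rule Max.boundedI)
  show "finite {card S |S. S \<subseteq> multilin_mons n \<and> indep_mod TV S}"
    by (rule finite_subset[of _ "{..card (Good k n)}"]) (auto dest: indep_bound[OF Vk])
  show "{card S |S. S \<subseteq> multilin_mons n \<and> indep_mod TV S} \<noteq> {}"
    by (auto simp: indep_mod_def intro!: exI[of _ "{}"])
  show "\<And>a. a \<in> {card S |S. S \<subseteq> multilin_mons n \<and> indep_mod TV S} \<Longrightarrow> a \<le> card (Good k n)"
    using indep_bound[OF Vk] by blast
qed

end


lemma choose_le_pow_k: "1 \<le> n \<Longrightarrow> j < k \<Longrightarrow> n choose j \<le> n ^ (k - 1)"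
proof -
  assume n: "1 \<le> n" and j: "j < k"
  have "n choose j \<le> n ^ j"
    by (cases "j \<le> n") (auto intro: binomial_le_pow simp: binomial_eq_0)
  also have "n ^ j \<le> n ^ (k - 1)" using n j by (intro power_increasing) auto
  finally show ?thesis .
qed

lemma card_I1: "1 \<le> n \<Longrightarrow> card {X. X \<subseteq> {1..n} \<and> card X < k} \<le> k * n ^ (k - 1)"
proof -
  assume n: "1 \<le> n"
  have eq: "{X. X \<subseteq> {1..n} \<and> card X < k} = (\<Union>j\<in>{..<k}. {X. X \<subseteq> {1..n} \<and> card X = j})" by auto
  have "card {X. X \<subseteq> {1..n} \<and> card X < k} \<le> (\<Sum>j\<in>{..<k}. card {X. X \<subseteq> {1..n} \<and> card X = j})"
    unfolding eq by (rule card_UN_le) simp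
  also have "\<dots> = (\<Sum>j\<in>{..<k}. n choose j)" by (simp add: n_subsets)
  also have "\<dots> \<le> (\<Sum>j\<in>{..<k}. n ^ (k - 1))" by (intro sum_mono choose_le_pow_k n) auto
  also have "\<dots> = k * n ^ (k - 1)" by simp
  finally show ?thesis .
qed

lemma card_Ix_bound:
  assumes n: "1 \<le> n"
  shows "card (Ix k n) \<le> 2 * k * n ^ (k - 1)"
proof -
  define I1 where "I1 = {X. X \<subseteq> {1..n} \<and> card X < k}"
  have fI1: "finite I1" unfolding I1_def by (rule finite_subset[of _ "Pow {1..n}"]) auto
  have sub: "Ix k n \<subseteq> I1 \<union> (\<lambda>Y. {1..n} - Y) ` I1"
  proof
    fix X assume "X \<in> Ix k n"
    then have X: "X \<subseteq> {1..n}" "card X < k \<or> n - card X < k" by (auto simp: Ix_def)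
    show "X \<in> I1 \<union> (\<lambda>Y. {1..n} - Y) ` I1"
    proof (cases "card X < k")
      case True then show ?thesis using X by (simp add: I1_def)
    next
      case False
      then have "n - card X < k" using X by simp
      moreover have "card ({1..n} - X) = n - card X" using X(1) by (simp add: card_Diff_subset finite_subset)
      ultimately have "{1..n} - X \<in> I1" by (simp add: I1_def)
      moreover have "X = {1..n} - ({1..n} - X)" using X(1) by blast
      ultimately show ?thesis by blast
    qed
  qed
  have "card (Ix k n) \<le> card (I1 \<union> (\<lambda>Y. {1..n} - Y) ` I1)"
    using fI1 by (intro card_mono sub) auto
  also have "\<dots> \<le> card I1 + card ((\<lambda>Y. {1..n} - Y) ` I1)" by (rule card_Un_le)
  also have "\<dots> \<le> card I1 + card I1" using card_image_le[OF fI1] by simp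
  also have "\<dots> \<le> 2 * k * n ^ (k - 1)" using card_I1[OF n, of k] by (simp add: I1_def)
  finally show ?thesis .
qed

lemma limsup_bound:
  fixes c :: "nat \<Rightarrow> nat" and k :: nat
  assumes k: "k \<ge> 1" and b: "\<And>n. n \<ge> 1 \<Longrightarrow> real (c n) \<le> 2 * real k * real n ^ (k - 1)"
  shows "limsup (\<lambda>n. ereal (root n (real (c n)))) \<le> 1"
proof -
  have ev: "eventually (\<lambda>n. ereal (root n (real (c n))) \<le> ereal (root n (2 * real k) * root n (real n) ^ (k - 1))) sequentially"
  proof (rule eventually_sequentiallyI[of 1])
    fix n :: nat assume n: "1 \<le> n"
    have "root n (real (c n)) \<le> root n (2 * real k * real n ^ (k - 1))"
      using n b[OF n] by simp
    also have "\<dots> = root n (2 * real k) * root n (real n) ^ (k - 1)"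
      using n by (simp add: real_root_mult real_root_power)
    finally show "ereal (root n (real (c n))) \<le> ereal (root n (2 * real k) * root n (real n) ^ (k - 1))" by simp
  qed
  have lim: "(\<lambda>n. root n (2 * real k) * root n (real n) ^ (k - 1)) \<longlonglongrightarrow> 1 * 1 ^ (k - 1)"
    using k by (intro tendsto_mult tendsto_power LIMSEQ_root_const LIMSEQ_root) auto
  have "limsup (\<lambda>n. ereal (root n (real (c n)))) \<le> limsup (\<lambda>n. ereal (root n (2 * real k) * root n (real n) ^ (k - 1)))"
    by (rule Limsup_mono[OF ev])
  also have "\<dots> = ereal 1"
    using lim by (intro lim_imp_Limsup) (auto intro: tendsto_ereal)
  finally show ?thesis by (simp add: one_ereal_def)
qed


theorem theorem4p6:
  fixes TV :: "'k::field_char_0 nalg set" and f :: "'k nalg" and k :: nat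
  assumes "subvariety_B TV"
    and "f \<in> TV"
    and "f \<notin> T_B"
    and "deg_FB f = k"
  shows "(\<exists>P :: real poly. degree P = k - 1 \<and> (\<forall>n\<ge>1. real (codim TV n) \<le> poly P (real n)))
       \<and> limsup (\<lambda>n. ereal (root n (real (codim TV n)))) \<le> 1"
proof -
  have TI: "T_ideal TV" and TBV: "T_B \<subseteq> TV" using assms(1) by (auto simp: subvariety_B_def)
  interpret TVI: Tid TV by unfold_locales (rule TI)
  define Pd where "Pd d \<longleftrightarrow> (\<exists>g. f - g \<in> T_B \<and> (\<forall>t\<in>Poly_Mapping.keys g. mdeg t \<le> d))" for d
  have "Pd (Max (insert 0 (mdeg ` Poly_Mapping.keys f)))"
    unfolding Pd_def by (intro exI[of _ f]) (auto simp: TB.zero)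
  then have "Pd (LEAST d. Pd d)" by (rule LeastI)
  then obtain g where g: "f - g \<in> T_B" "\<forall>t\<in>Poly_Mapping.keys g. mdeg t \<le> k"
    using assms(4) unfolding Pd_def deg_FB_def by blast
  have gV: "g \<in> TV"
  proof -
    have "f - (f - g) \<in> TV" using assms(2) g(1) TBV by (rule_tac TVI.diff) auto
    then show ?thesis by simp
  qed
  have gB: "g \<notin> T_B"
  proof
    assume "g \<in> T_B"
    then have "(f - g) + g \<in> T_B" using g(1) by (intro TB.add)
    then show False using assms(3) by simp
  qed
  obtain q where q: "q \<in> TV" "q \<notin> T_B" "Poly_Mapping.keys q \<subseteq> Poly_Mapping.keys g"
    "\<forall>t\<in>Poly_Mapping.keys q. \<forall>u\<in>Poly_Mapping.keys q. LV t = LV u"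
    using homog[OF TI gV gB] by blast
  have "q \<noteq> 0" using q(2) TB.zero by auto
  have "\<exists>t. Poly_Mapping.lookup q t \<noteq> 0"
  proof (rule ccontr)
    assume "\<not> ?thesis"
    then have "q = 0" by (intro poly_mapping_eqI) simp
    then show False using \<open>q \<noteq> 0\<close> by simp
  qed
  then obtain t0 where t0: "t0 \<in> Poly_Mapping.keys q" by (auto simp: in_keys_iff)
  define M where "M = LV t0"
  have qM: "\<forall>t\<in>Poly_Mapping.keys q. LV t = M" using q(4) t0 unfolding M_def by blast
  have "mdeg t0 \<le> k" using g(2) q(3) t0 by blast
  then have sM: "size M \<le> k" by (simp add: M_def mdeg_def)
  obtain G V where GV: "G \<in> TV" "G \<notin> T_B" "finite V" "card V = size M"
    "\<forall>t\<in>Poly_Mapping.keys G. LV t = mset_set V"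
    using linearize[OF TI q(1,2) qM] by blast
  interpret I: ident TV G V
    by unfold_locales (use TI TBV GV in auto)
  have Vk: "card V \<le> k" using GV(4) sM by simp
  have k1: "k \<ge> 1"
  proof -
    have "card V \<noteq> 0" using I.V_ne GV(3) by simp
    then show ?thesis using Vk by simp
  qed
  have bound: "real (codim TV n) \<le> 2 * real k * real n ^ (k - 1)" if n: "n \<ge> 1" for n
  proof -
    have "codim TV n \<le> card (Good k n)" by (rule I.codim_bound[OF Vk])
    also have "\<dots> \<le> card (Ix k n)" unfolding Good_def by (rule card_image_le[OF I.finite_Ix])
    also have "\<dots> \<le> 2 * k * n ^ (k - 1)" by (rule card_Ix_bound[OF n])
    finally have "codim TV n \<le> 2 * k * n ^ (k - 1)" .
    then have "real (codim TV n) \<le> real (2 * k * n ^ (k - 1))" by (simp only: of_nat_le_iff)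
    then show ?thesis by simp
  qed
  define P :: "real poly" where "P = monom (2 * real k) (k - 1)"
  have "degree P = k - 1" using k1 by (simp add: P_def degree_monom_eq)
  moreover have "\<forall>n\<ge>1. real (codim TV n) \<le> poly P (real n)"
    using bound by (simp add: P_def poly_monom)
  moreover have "limsup (\<lambda>n. ereal (root n (real (codim TV n)))) \<le> 1"
    by (rule limsup_bound[OF k1 bound])
  ultimately show ?thesis by blast
qed


end
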